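(* Let $(x^*,s^* )$ be a KKT pair of (P) ($\nabla f(x^* )-\nabla c(x^* )s^*=0$, $c(x^* )\ge0$, $s^*\ge0$, $(s^* )^Tc(x^* )=0$). Assume: $f$ and $c_i$ are twice differentiable on $\mathbb{R}^n$ with second derivatives Lipschitz continuous in a neighborhood of $x^*$; the gradients $\nabla c_i(x^* )$, $i\in\{i:c_i(x^* )=0\}$, are linearly independent; strict complementarity $s^*+c(x^* )>0$ holds; and for a fixed $\rho_0>0$ the matrix $$B^*=\nabla^2f(x^* )-\sum_{i=1}^m s_i^*\nabla^2c_i(x^* )+\rho_0\sum_{i:\,s_i^*>0}\nabla c_i(x^* )\nabla c_i(x^* )^T$$ is positive definite. Then there exist positive scalars $\bar\mu,\varepsilon,\delta$ such that for all $(s,\mu)\in D=\{(s,\mu):\|s-s^*\|\le\delta,\ \mu\in[0,\bar\mu)\}$ the problem $\min\{F(x,s;\mu,\rho_0):\|x-x^*\|<\varepsilon\}$ has a unique solution $x(s;\mu)$; the map $(s,\mu)\mapsto x(s;\mu)$ is continuously differentiable in the interior of $D$; and there is a constant $C>0$ such that for all $(s,\mu)\in D$, $$\|x(s;\mu)-x^*\|\le C(\|s-s^*\|+\mu),\qquad \|\tilde s(s;\mu)-s^*\|\le C(\|s-s^*\|+\mu),$$ where $\tilde s(s;\mu)=\rho_0\,y(x(s;\mu),s;\mu,\rho_0)$.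
   Context: Problem (P): $\min f(x)$ s.t. $c(x)\ge0$, with $f:\mathbb{R}^n\to\mathbb{R}$, $c=(c_1,\dots,c_m):\mathbb{R}^n\to\mathbb{R}^m$; $\nabla c(x)\in\mathbb{R}^{n\times m}$ has $i$-th column $\nabla c_i(x)$. For $\mu\ge0$, $\rho>0$, $x\in\mathbb{R}^n$, $s\in\mathbb{R}^m$ define $z_i(x,s;\mu,\rho)=\frac{1}{2\rho}\big(\sqrt{(s_i-\rho c_i(x))^2+4\rho\mu}-(s_i-\rho c_i(x))\big)$, $y_i(x,s;\mu,\rho)=\frac{1}{2\rho}\big(\sqrt{(s_i-\rho c_i(x))^2+4\rho\mu}+(s_i-\rho c_i(x))\big)$, $h_i(x,s;\mu,\rho)=-\mu\ln z_i(x,s;\mu,\rho)+\frac{\rho}{2}y_i(x,s;\mu,\rho)^2-\frac{1}{2\rho}s_i^2$ (for $\mu=0$ the term $-\mu\ln z_i$ is omitted), and $F(x,s;\mu,\rho)=f(x)+\sum_{i=1}^m h_i(x,s;\mu,\rho)$; $y=(y_i)$. $\|\cdot\|$ is the Euclidean norm. *)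

theory Defs
  imports "HOL-Analysis.Analysis"
begin

definition zfun :: "(real^'n \<Rightarrow> real^'m) \<Rightarrow> real^'n \<Rightarrow> real^'m \<Rightarrow> real \<Rightarrow> real \<Rightarrow> 'm \<Rightarrow> real" where
  "zfun c x s \<mu> \<rho> i = (1 / (2*\<rho>)) *
     (sqrt ((s$i - \<rho> * c x $ i)^2 + 4*\<rho>*\<mu>) - (s$i - \<rho> * c x $ i))"

definition yfun :: "(real^'n \<Rightarrow> real^'m) \<Rightarrow> real^'n \<Rightarrow> real^'m \<Rightarrow> real \<Rightarrow> real \<Rightarrow> 'm \<Rightarrow> real" where
  "yfun c x s \<mu> \<rho> i = (1 / (2*\<rho>)) *
     (sqrt ((s$i - \<rho> * c x $ i)^2 + 4*\<rho>*\<mu>) + (s$i - \<rho> * c x $ i))"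

definition hfun :: "(real^'n \<Rightarrow> real^'m) \<Rightarrow> real^'n \<Rightarrow> real^'m \<Rightarrow> real \<Rightarrow> real \<Rightarrow> 'm \<Rightarrow> real" where
  "hfun c x s \<mu> \<rho> i =
     (if \<mu> = 0 then 0 else - \<mu> * ln (zfun c x s \<mu> \<rho> i))
     + \<rho> / 2 * (yfun c x s \<mu> \<rho> i)^2 - 1 / (2*\<rho>) * (s$i)^2"

definition Ffun :: "(real^'n \<Rightarrow> real) \<Rightarrow> (real^'n \<Rightarrow> real^'m) \<Rightarrow> real^'n \<Rightarrow> real^'m \<Rightarrow> real \<Rightarrow> real \<Rightarrow> real" where
  "Ffun f c x s \<mu> \<rho> = f x + (\<Sum>i\<in>UNIV. hfun c x s \<mu> \<rho> i)"

definition yvec :: "(real^'n \<Rightarrow> real^'m) \<Rightarrow> real^'n \<Rightarrow> real^'m \<Rightarrow> real \<Rightarrow> real \<Rightarrow> real^'m" where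
  "yvec c x s \<mu> \<rho> = (\<chi> i. yfun c x s \<mu> \<rho> i)"

definition outer :: "real^'n \<Rightarrow> real^'n^'n" where
  "outer u = (\<chi> j k. u$j * u$k)"

end

theory Submission
  imports Defs
begin

definition phi :: "real \<Rightarrow> real \<Rightarrow> real \<Rightarrow> real" where
  "phi \<rho> t \<mu> = (sqrt (t^2 + 4*\<rho>*\<mu>) + t) / 2"
definition phit :: "real \<Rightarrow> real \<Rightarrow> real \<Rightarrow> real" where
  "phit \<rho> t \<mu> = (1 + t / sqrt (t^2 + 4*\<rho>*\<mu>)) / 2"
definition phim :: "real \<Rightarrow> real \<Rightarrow> real \<Rightarrow> real" where
  "phim \<rho> t \<mu> = \<rho> / sqrt (t^2 + 4*\<rho>*\<mu>)"

definition Hs :: "real \<Rightarrow> real \<Rightarrow> real \<Rightarrow> real" where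
  "Hs \<rho> \<mu> t = (if \<mu> = 0 then 0 else - \<mu> * ln ((1 / (2*\<rho>)) * (sqrt (t^2 + 4*\<rho>*\<mu>) - t)))
     + \<rho> / 2 * ((1 / (2*\<rho>)) * (sqrt (t^2 + 4*\<rho>*\<mu>) + t))^2"

lemma hfun_Hs: "hfun c x s \<mu> \<rho> i = Hs \<rho> \<mu> (s$i - \<rho> * c x $ i) - 1 / (2*\<rho>) * (s$i)^2"
  unfolding hfun_def Hs_def zfun_def yfun_def by simp

lemma yfun_phi: "\<rho> > 0 \<Longrightarrow> \<rho> * yfun c x s \<mu> \<rho> i = phi \<rho> (s$i - \<rho> * c x $ i) \<mu>"
  unfolding yfun_def phi_def by (simp add: field_simps)

lemma alg1:
  fixes r t \<rho> \<mu> :: real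
  assumes "r > 0" "r - t > 0" "\<rho> > 0" "r^2 = t^2 + 4*\<rho>*\<mu>"
  shows "(r + t) * (inverse r * t * 2 + 2) / (8 * \<rho>) -
        (4 * (inverse r * t) - 4) * \<mu> / (r * 4 - t * 4) = (r + t) / 2 / \<rho>"
proof -
  have m: "\<mu> = (r*r - t*t)/(\<rho>*4)" using assms(3,4) by (simp add: field_simps power2_eq_square)
  have "r*4 - t*4 \<noteq> 0" using assms by simp
  then show ?thesis unfolding m using assms(1,2,3)
    by (simp add: field_simps power2_eq_square)
qed

lemma Hs_deriv_pos:
  assumes "\<rho> > 0" "\<mu> > 0"
  shows "(Hs \<rho> \<mu> has_real_derivative phi \<rho> t \<mu> / \<rho>) (at t)"
proof -
  define r where "r = sqrt (t^2 + 4*\<rho>*\<mu>)"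
  have pos: "t^2 + 4*\<rho>*\<mu> > 0" using assms by (simp add: add_nonneg_pos)
  have r2: "r^2 = t^2 + 4*\<rho>*\<mu>" unfolding r_def using pos by simp
  have rgt: "r > \<bar>t\<bar>" unfolding r_def using assms
    by (metis abs_of_nonneg less_add_same_cancel1 mult_pos_pos pos real_sqrt_abs real_sqrt_less_iff zero_less_numeral abs_ge_zero)
  have rt: "r - t > 0" using rgt by linarith
  have rp: "r > 0" using rgt by linarith
  have ev: "\<forall>\<^sub>F u in nhds t. Hs \<rho> \<mu> u = - \<mu> * ln ((1 / (2*\<rho>)) * (sqrt (u^2 + 4*\<rho>*\<mu>) - u))
     + \<rho> / 2 * ((1 / (2*\<rho>)) * (sqrt (u^2 + 4*\<rho>*\<mu>) + u))^2"
    using assms by (simp add: Hs_def)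
  have d: "((\<lambda>u. - \<mu> * ln ((1 / (2*\<rho>)) * (sqrt (u^2 + 4*\<rho>*\<mu>) - u))
     + \<rho> / 2 * ((1 / (2*\<rho>)) * (sqrt (u^2 + 4*\<rho>*\<mu>) + u))^2) has_real_derivative
     phi \<rho> t \<mu> / \<rho>) (at t)"
    using pos rt assms apply (auto intro!: derivative_eq_intros simp: phi_def r_def[symmetric])
    using alg1[OF rp rt assms(1) r2] by simp
  show ?thesis
    using DERIV_cong_ev[OF refl ev refl] d by simp
qed

lemma Hs_deriv_zero:
  assumes "\<rho> > 0" "t \<noteq> 0"
  shows "(Hs \<rho> 0 has_real_derivative phi \<rho> t 0 / \<rho>) (at t)"
proof (cases "t > 0")
  case True
  have d: "((\<lambda>u. u^2 / (2*\<rho>)) has_real_derivative t / \<rho>) (at t)"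
    using assms by (auto intro!: derivative_eq_intros simp: field_simps)
  have e: "\<And>u. u \<in> {0<..} \<Longrightarrow> u^2 / (2*\<rho>) = Hs \<rho> 0 u"
    using assms by (simp add: Hs_def power2_eq_square field_simps)
  have "phi \<rho> t 0 = t" using True by (simp add: phi_def)
  then show ?thesis using has_field_derivative_transform_within_open[OF d open_greaterThan _ e] True by simp
next
  case False
  then have tn: "t < 0" using assms by simp
  have d: "((\<lambda>u. 0) has_real_derivative 0) (at t)" by simp
  have e: "\<And>u. u \<in> {..<0} \<Longrightarrow> (0::real) = Hs \<rho> 0 u"
    using assms by (simp add: Hs_def)
  have "phi \<rho> t 0 = 0" using tn by (simp add: phi_def)
  then show ?thesis using has_field_derivative_transform_within_open[OF d open_lessThan _ e] tn by simp
qed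

lemma Hs_deriv:
  assumes "\<rho> > 0" "\<mu> \<ge> 0" "\<mu> = 0 \<longrightarrow> t \<noteq> 0"
  shows "(Hs \<rho> \<mu> has_real_derivative phi \<rho> t \<mu> / \<rho>) (at t)"
  using assms Hs_deriv_pos Hs_deriv_zero by (cases "\<mu> = 0") auto

lemma phi_has_derivative:
  fixes T M :: "'a::real_normed_vector \<Rightarrow> real"
  assumes "(T has_derivative T') (at w)" "(M has_derivative M') (at w)" "T w ^2 + 4*\<rho>*M w > 0"
  shows "((\<lambda>w. phi \<rho> (T w) (M w)) has_derivative
           (\<lambda>v. phit \<rho> (T w) (M w) * T' v + phim \<rho> (T w) (M w) * M' v)) (at w)"
proof -
  have "((\<lambda>w. (sqrt ((T w)^2 + 4*\<rho>*M w) + T w) / 2) has_derivative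
     (\<lambda>v. (((2 * T w * T' v + 4*\<rho>*M' v) * (inverse (sqrt ((T w)^2 + 4*\<rho>*M w)) / 2)) + T' v) / 2)) (at w)"
    using assms by (auto intro!: derivative_eq_intros simp: ac_simps)
  moreover have "(\<lambda>v. (((2 * T w * T' v + 4*\<rho>*M' v) * (inverse (sqrt ((T w)^2 + 4*\<rho>*M w)) / 2)) + T' v) / 2)
     = (\<lambda>v. phit \<rho> (T w) (M w) * T' v + phim \<rho> (T w) (M w) * M' v)"
    using assms(3) by (intro ext) (simp add: phit_def phim_def field_simps)
  ultimately show ?thesis unfolding phi_def by simp
qed

lemma outer_mult: "outer u *v h = (u \<bullet> h) *\<^sub>R u"
  by (simp add: vec_eq_iff outer_def matrix_vector_mult_def inner_vec_def sum_distrib_left mult_ac)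

lemma sum_matrix_vector: "finite S \<Longrightarrow> (\<Sum>i\<in>S. (M i :: real^'n^'k)) *v v = (\<Sum>i\<in>S. M i *v v)"
  by (induct S rule: finite_induct) (auto simp: matrix_vector_mult_add_rdistrib)

lemma inner_outer: "v \<bullet> (outer u *v v) = (u \<bullet> v)^2"
  by (simp add: outer_mult power2_eq_square inner_commute)

lemmas has_derivative_vec_nth' = bounded_linear.has_derivative[OF bounded_linear_vec_nth]

locale prob =
  fixes f :: "real^'n \<Rightarrow> real" and c :: "real^'n \<Rightarrow> real^'m"
    and Df :: "real^'n \<Rightarrow> real^'n" and Hf :: "real^'n \<Rightarrow> real^'n^'n"
    and Dc :: "'m \<Rightarrow> real^'n \<Rightarrow> real^'n" and Hc :: "'m \<Rightarrow> real^'n \<Rightarrow> real^'n^'n"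
    and xs :: "real^'n" and ss :: "real^'m" and \<rho> :: real
  assumes f_grad: "\<And>x. (f has_derivative (\<lambda>h. Df x \<bullet> h)) (at x)"
    and f_hess: "\<And>x. (Df has_derivative (\<lambda>h. Hf x *v h)) (at x)"
    and c_grad: "\<And>i x. ((\<lambda>x. c x $ i) has_derivative (\<lambda>h. Dc i x \<bullet> h)) (at x)"
    and c_hess: "\<And>i x. (Dc i has_derivative (\<lambda>h. Hc i x *v h)) (at x)"
    and lipschitz: "\<exists>r>0. \<exists>L. \<forall>x\<in>ball xs r. \<forall>x'\<in>ball xs r.
          norm (Hf x - Hf x') \<le> L * norm (x - x') \<and>
          (\<forall>i. norm (Hc i x - Hc i x') \<le> L * norm (x - x'))"
    and KKT_stat: "Df xs - (\<Sum>i\<in>UNIV. ss$i *\<^sub>R Dc i xs) = 0"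
    and KKT_feas: "\<forall>i. c xs $ i \<ge> 0"
    and KKT_dual: "\<forall>i. ss $ i \<ge> 0"
    and KKT_compl: "ss \<bullet> c xs = 0"
    and strict_compl: "\<forall>i. ss $ i + c xs $ i > 0"
    and rho0_pos: "\<rho> > 0"
    and B_posdef: "\<forall>v. v \<noteq> 0 \<longrightarrow>
          v \<bullet> ((Hf xs - (\<Sum>i\<in>UNIV. ss$i *\<^sub>R Hc i xs)
                 + \<rho> *\<^sub>R (\<Sum>i\<in>{i. ss$i > 0}. outer (Dc i xs))) *v v) > 0"
begin

definition tt where "tt i x s = s$i - \<rho> * c x $ i"
definition G where "G x s \<mu> = Df x - (\<Sum>i\<in>UNIV. phi \<rho> (tt i x s) \<mu> *\<^sub>R Dc i x)"
definition HM where "HM x s \<mu> = Hf x - (\<Sum>i\<in>UNIV. phi \<rho> (tt i x s) \<mu> *\<^sub>R Hc i x)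
   + \<rho> *\<^sub>R (\<Sum>i\<in>UNIV. phit \<rho> (tt i x s) \<mu> *\<^sub>R outer (Dc i x))"
definition GP where "GP x s \<mu> k m = (\<Sum>i\<in>UNIV. (phit \<rho> (tt i x s) \<mu> * k$i + phim \<rho> (tt i x s) \<mu> * m) *\<^sub>R Dc i x)"
definition GG where "GG w = G (fst w) (fst (snd w)) (snd (snd w))"
definition GD where "GD w v = HM (fst w) (fst (snd w)) (snd (snd w)) *v fst v
    - GP (fst w) (fst (snd w)) (snd (snd w)) (fst (snd v)) (snd (snd v))"

lemma dc_fst: "((\<lambda>w. c (fst w) $ i) has_derivative (\<lambda>v. Dc i (fst w) \<bullet> fst v)) (at w)"
  by (rule has_derivative_compose[OF has_derivative_fst[OF has_derivative_ident] c_grad])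

lemma dDc_fst: "((\<lambda>w. Dc i (fst w)) has_derivative (\<lambda>v. Hc i (fst w) *v fst v)) (at w)"
  by (rule has_derivative_compose[OF has_derivative_fst[OF has_derivative_ident] c_hess])

lemma dDf_fst: "((\<lambda>w. Df (fst w)) has_derivative (\<lambda>v. Hf (fst w) *v fst v)) (at w)"
  by (rule has_derivative_compose[OF has_derivative_fst[OF has_derivative_ident] f_hess])

lemma dtt: "((\<lambda>w. tt i (fst w) (fst (snd w))) has_derivative
    (\<lambda>v. fst (snd v) $ i - \<rho> * (Dc i (fst w) \<bullet> fst v))) (at w)"
  unfolding tt_def
  by (intro has_derivative_diff has_derivative_mult_right dc_fst
       has_derivative_vec_nth' has_derivative_fst has_derivative_snd has_derivative_ident)

lemma HM_mult: "HM x s \<mu> *v h = Hf x *v h - (\<Sum>i\<in>UNIV. phi \<rho> (tt i x s) \<mu> *\<^sub>R (Hc i x *v h))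
   + \<rho> *\<^sub>R (\<Sum>i\<in>UNIV. (phit \<rho> (tt i x s) \<mu> * (Dc i x \<bullet> h)) *\<^sub>R Dc i x)"
  unfolding HM_def
  by (simp add: matrix_vector_mult_add_rdistrib matrix_vector_mult_diff_rdistrib sum_matrix_vector
      scaleR_matrix_vector_assoc[symmetric] outer_mult)

lemma GG_deriv:
  assumes "\<forall>i. (tt i (fst w) (fst (snd w)))^2 + 4*\<rho>* snd (snd w) > 0"
  shows "(GG has_derivative GD w) (at w)"
proof -
  have di: "((\<lambda>w. phi \<rho> (tt i (fst w) (fst (snd w))) (snd (snd w)) *\<^sub>R Dc i (fst w)) has_derivative
     (\<lambda>v. phi \<rho> (tt i (fst w) (fst (snd w))) (snd (snd w)) *\<^sub>R (Hc i (fst w) *v fst v)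
        + (phit \<rho> (tt i (fst w) (fst (snd w))) (snd (snd w)) * (fst (snd v) $ i - \<rho> * (Dc i (fst w) \<bullet> fst v))
           + phim \<rho> (tt i (fst w) (fst (snd w))) (snd (snd w)) * snd (snd v)) *\<^sub>R Dc i (fst w))) (at w)" for i
    by (rule has_derivative_scaleR[OF phi_has_derivative[OF dtt has_derivative_snd[OF has_derivative_snd[OF has_derivative_ident]]] dDc_fst])
       (use assms in auto)
  have d: "(GG has_derivative (\<lambda>v. Hf (fst w) *v fst v - (\<Sum>i\<in>UNIV. 
        phi \<rho> (tt i (fst w) (fst (snd w))) (snd (snd w)) *\<^sub>R (Hc i (fst w) *v fst v)
        + (phit \<rho> (tt i (fst w) (fst (snd w))) (snd (snd w)) * (fst (snd v) $ i - \<rho> * (Dc i (fst w) \<bullet> fst v))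
           + phim \<rho> (tt i (fst w) (fst (snd w))) (snd (snd w)) * snd (snd v)) *\<^sub>R Dc i (fst w)))) (at w)"
    unfolding GG_def G_def
    by (intro has_derivative_diff dDf_fst has_derivative_sum di)
  show ?thesis
    apply (rule has_derivative_eq_rhs[OF d])
    apply (rule ext)
    apply (simp add: GD_def HM_mult GP_def algebra_simps sum.distrib sum_subtractf scaleR_sum_right)
    done
qed

end

context prob begin

lemma dtt_x: "((\<lambda>x. tt i x s) has_derivative (\<lambda>h. - (\<rho> * (Dc i x \<bullet> h)))) (at x)"
proof -
  have "((\<lambda>x. s$i - \<rho> * c x $ i) has_derivative (\<lambda>h. 0 - \<rho> * (Dc i x \<bullet> h))) (at x)"
    by (intro has_derivative_diff has_derivative_const has_derivative_mult_right c_grad)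
  then show ?thesis unfolding tt_def by simp
qed

lemma F_deriv:
  assumes "\<mu> \<ge> 0" "\<mu> = 0 \<longrightarrow> (\<forall>i. tt i x s \<noteq> 0)"
  shows "((\<lambda>x. Ffun f c x s \<mu> \<rho>) has_derivative (\<lambda>h. G x s \<mu> \<bullet> h)) (at x)"
proof -
  have hi: "((\<lambda>x. hfun c x s \<mu> \<rho> i) has_derivative (\<lambda>h. - (\<rho> * (Dc i x \<bullet> h)) * (phi \<rho> (tt i x s) \<mu> / \<rho>))) (at x)" for i
  proof -
    have "((\<lambda>x. Hs \<rho> \<mu> (tt i x s) - 1 / (2*\<rho>) * (s$i)^2) has_derivative (\<lambda>h. - (\<rho> * (Dc i x \<bullet> h)) * (phi \<rho> (tt i x s) \<mu> / \<rho>))) (at x)"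
      using has_derivative_diff[OF DERIV_compose_FDERIV[OF Hs_deriv[OF rho0_pos assms(1)] dtt_x] has_derivative_const]
        assms by simp
    then show ?thesis unfolding hfun_Hs tt_def .
  qed
  have d: "((\<lambda>x. Ffun f c x s \<mu> \<rho>) has_derivative (\<lambda>h. Df x \<bullet> h + (\<Sum>i\<in>UNIV. - (\<rho> * (Dc i x \<bullet> h)) * (phi \<rho> (tt i x s) \<mu> / \<rho>)))) (at x)"
    unfolding Ffun_def by (intro has_derivative_add f_grad has_derivative_sum hi)
  show ?thesis
    apply (rule has_derivative_eq_rhs[OF d])
    using rho0_pos by (auto simp: G_def inner_diff_left inner_sum_left sum_negf mult.commute intro!: ext sum.cong)
qed

end

lemma cont_outer[continuous_intros]: "continuous F g \<Longrightarrow> continuous F (\<lambda>x. outer (g x))"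
  unfolding continuous_def outer_def
  apply (rule tendsto_vec_lambda)+
  apply (rule tendsto_mult; rule tendsto_vec_nth; assumption)
  done

lemma cont_phi[continuous_intros]: "continuous F T \<Longrightarrow> continuous F M \<Longrightarrow> continuous F (\<lambda>w. phi \<rho> (T w) (M w))"
  unfolding phi_def continuous_def by (intro tendsto_intros) auto

lemma cont_phit: "isCont T w \<Longrightarrow> isCont M w \<Longrightarrow> T w ^2 + 4*\<rho>* M w \<noteq> 0 \<Longrightarrow> isCont (\<lambda>w. phit \<rho> (T w) (M w)) w"
  unfolding phit_def by (intro continuous_intros isCont_o2[where g=sqrt] continuous_real_sqrt) auto

lemma cont_phim: "isCont T w \<Longrightarrow> isCont M w \<Longrightarrow> T w ^2 + 4*\<rho>* M w \<noteq> 0 \<Longrightarrow> isCont (\<lambda>w. phim \<rho> (T w) (M w)) w"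
  unfolding phim_def by (intro continuous_intros isCont_o2[where g=sqrt] continuous_real_sqrt) auto

context prob begin

definition BM where "BM = Hf xs - (\<Sum>i\<in>UNIV. ss$i *\<^sub>R Hc i xs) + \<rho> *\<^sub>R (\<Sum>i\<in>{i. ss$i > 0}. outer (Dc i xs))"

lemma compl_i: "ss$i * c xs $ i = 0"
proof -
  have "(\<Sum>i\<in>UNIV. ss$i * c xs $ i) = 0" using KKT_compl by (simp add: inner_vec_def)
  moreover have "\<forall>i\<in>UNIV. 0 \<le> ss$i * c xs $ i" using KKT_feas KKT_dual by simp
  ultimately show ?thesis by (simp add: sum_nonneg_eq_0_iff)
qed

lemma tstar: "tt i xs ss = (if ss$i > 0 then ss$i else - \<rho> * c xs $ i)"
  using compl_i[of i] KKT_dual[rule_format, of i] by (auto simp: tt_def)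

lemma tstar_pos: "ss$i > 0 \<Longrightarrow> tt i xs ss > 0"
  using tstar by simp

lemma tstar_neg: "\<not> ss$i > 0 \<Longrightarrow> tt i xs ss < 0"
proof -
  assume a: "\<not> ss$i > 0"
  have "ss$i = 0" using KKT_dual[rule_format, of i] a by linarith
  then have "c xs $ i > 0" using strict_compl[rule_format, of i] by simp
  then show ?thesis using tstar[of i] a rho0_pos by (simp add: mult_pos_pos)
qed

lemma tstar_nz: "tt i xs ss \<noteq> 0"
  using tstar_pos tstar_neg by (metis less_irrefl)

lemma phi_star: "phi \<rho> (tt i xs ss) 0 = ss$i"
proof (cases "ss$i > 0")
  case True then show ?thesis using tstar[of i] by (simp add: phi_def)
next
  case False then show ?thesis using tstar_neg[of i] KKT_dual[rule_format, of i] by (simp add: phi_def)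
qed

lemma phit_star: "phit \<rho> (tt i xs ss) 0 = (if ss$i > 0 then 1 else 0)"
proof (cases "ss$i > 0")
  case True then show ?thesis using tstar_pos[of i] by (simp add: phit_def)
next
  case False then show ?thesis using tstar_neg[of i] by (simp add: phit_def)
qed

lemma G_star: "G xs ss 0 = 0"
  using KKT_stat by (simp add: G_def phi_star)

lemma HM_star: "HM xs ss 0 = BM"
proof -
  have "(\<Sum>i\<in>UNIV. phit \<rho> (tt i xs ss) 0 *\<^sub>R outer (Dc i xs)) = (\<Sum>i\<in>UNIV. if ss$i > 0 then outer (Dc i xs) else 0)"
    by (intro sum.cong refl) (simp add: phit_star)
  also have "\<dots> = (\<Sum>i\<in>{i. ss$i > 0}. outer (Dc i xs))"
    by (simp add: sum.If_cases)
  finally show ?thesis by (simp add: HM_def BM_def phi_star)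
qed

lemma Q_scale: fixes M :: "real^'k^'k" shows "(a *\<^sub>R v) \<bullet> (M *v (a *\<^sub>R v)) = a^2 * (v \<bullet> (M *v v))"
  by (simp add: matrix_vector_mult_scaleR power2_eq_square)

lemma kappa0: "\<exists>\<kappa>>0. \<forall>v. \<kappa> * (norm v)^2 \<le> v \<bullet> (BM *v v)"
proof -
  have "sphere (0::real^'n) 1 \<noteq> {}"
  proof -
    have "axis undefined 1 \<in> sphere (0::real^'n) 1" by simp
    then show ?thesis by blast
  qed
  moreover have "continuous_on (sphere 0 1) (\<lambda>v::real^'n. v \<bullet> (BM *v v))"
    by (intro continuous_intros bounded_linear.continuous_on[OF matrix_vector_mul_bounded_linear])
  ultimately obtain v0 where v0: "v0 \<in> sphere 0 1" "\<forall>y\<in>sphere 0 1. v0 \<bullet> (BM *v v0) \<le> y \<bullet> (BM *v y)"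
    using continuous_attains_inf[OF compact_sphere] by blast
  have "v0 \<noteq> 0" using v0(1) by auto
  then have pos: "v0 \<bullet> (BM *v v0) > 0" using B_posdef unfolding BM_def by blast
  have "v0 \<bullet> (BM *v v0) * (norm v)^2 \<le> v \<bullet> (BM *v v)" for v
  proof (cases "v = 0")
    case False
    define u where "u = (1 / norm v) *\<^sub>R v"
    have u: "u \<in> sphere 0 1" using False by (simp add: u_def)
    have v: "v = norm v *\<^sub>R u" using False by (simp add: u_def)
    have "v \<bullet> (BM *v v) = (norm v)^2 * (u \<bullet> (BM *v u))" by (subst (1 2) v) (rule Q_scale)
    then show ?thesis using v0(2) u by (simp add: mult.commute mult_left_mono)
  qed simp
  then show ?thesis using pos by blast
qed

end

lemma cont_mv[continuous_intros]:
  fixes A :: "'a::t2_space \<Rightarrow> real^'n^'k"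
  shows "continuous F A \<Longrightarrow> continuous F (\<lambda>x. A x *v h)"
  unfolding continuous_def matrix_vector_mult_def
  apply (rule tendsto_vec_lambda)
  apply (rule tendsto_sum)
  apply (rule tendsto_mult)
   apply (rule tendsto_vec_nth; rule tendsto_vec_nth; assumption)
  apply (rule tendsto_const)
  done

lemma aux_lin: fixes P A B C X :: real
  shows "P = (A + B + C)/2 \<Longrightarrow> B \<le> X \<Longrightarrow> -B \<le> X \<Longrightarrow> C \<le> X \<Longrightarrow> -C \<le> X \<Longrightarrow> 0 \<le> A \<Longrightarrow> \<bar>P\<bar> \<le> X + A/2"
  by (simp add: abs_le_iff)

lemma phi_lip:
  assumes "\<rho> > 0" "a > 0" "\<mu> \<ge> 0" "\<bar>t\<bar> \<ge> a"
  shows "\<bar>phi \<rho> t \<mu> - phi \<rho> t0 0\<bar> \<le> \<bar>t - t0\<bar> + 2*\<rho>*\<mu>/a"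
proof -
  define r where "r = sqrt (t^2 + 4*\<rho>*\<mu>)"
  have nn: "t^2 + 4*\<rho>*\<mu> \<ge> 0" using assms by simp
  have r2: "r^2 = t^2 + 4*\<rho>*\<mu>" unfolding r_def using nn by simp
  have rge: "r \<ge> \<bar>t\<bar>" unfolding r_def using assms
    by (metis abs_ge_zero le_add_same_cancel1 mult_nonneg_nonneg real_sqrt_abs real_sqrt_le_iff zero_le_numeral less_imp_le)
  have sp: "r + \<bar>t\<bar> \<ge> a" using rge assms by linarith
  have "(r - \<bar>t\<bar>) * (r + \<bar>t\<bar>) = 4*\<rho>*\<mu>" using r2 by (simp add: algebra_simps power2_eq_square)
  then have e1: "r - \<bar>t\<bar> = 4*\<rho>*\<mu> / (r + \<bar>t\<bar>)" using sp assms by (simp add: field_simps)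
  have "4*\<rho>*\<mu> / (r + \<bar>t\<bar>) \<le> 4*\<rho>*\<mu> / a"
    using sp assms by (intro divide_left_mono) auto
  then have b1: "r - \<bar>t\<bar> \<le> 4*\<rho>*\<mu>/a" using e1 by simp
  have b0: "0 \<le> r - \<bar>t\<bar>" using rge by simp
  have e: "phi \<rho> t \<mu> - phi \<rho> t0 0 = ((r - \<bar>t\<bar>) + (\<bar>t\<bar> - \<bar>t0\<bar>) + (t - t0)) / 2"
    unfolding phi_def r_def by (simp add: field_simps)
  have "\<bar>phi \<rho> t \<mu> - phi \<rho> t0 0\<bar> \<le> \<bar>t - t0\<bar> + (r - \<bar>t\<bar>)/2"
    by (rule aux_lin[OF e]) (use b0 in auto)
  moreover have "(r - \<bar>t\<bar>)/2 \<le> 2*\<rho>*\<mu>/a" using b1 by simp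
  ultimately show ?thesis by linarith
qed

lemma lb_leftinv:
  fixes A :: "'a::euclidean_space \<Rightarrow>\<^sub>L 'a"
  assumes "c > 0" "\<forall>v. c * norm v \<le> norm (blinfun_apply A v)"
  shows "\<exists>B. B o\<^sub>L A = id_blinfun"
proof -
  have "inj (blinfun_apply A)"
  proof (rule injI)
    fix x y assume "blinfun_apply A x = blinfun_apply A y"
    then have "blinfun_apply A (x - y) = 0" by (simp add: blinfun.diff_right)
    then have "c * norm (x - y) \<le> 0" using assms(2) by (metis norm_zero)
    then show "x = y" using assms(1) by (simp add: mult_le_0_iff)
  qed
  moreover have "linear (blinfun_apply A)" by (simp add: bounded_linear.linear[OF blinfun.bounded_linear_right])
  ultimately obtain g where g: "linear g" "g \<circ> blinfun_apply A = id"
    using linear_injective_left_inverse by blast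
  have bg: "bounded_linear g" using g(1) by (simp add: linear_conv_bounded_linear)
  have "Blinfun g o\<^sub>L A = id_blinfun"
    by (rule blinfun_eqI) (simp add: bounded_linear_Blinfun_apply[OF bg] pointfree_idE[OF g(2)])
  then show ?thesis by blast
qed

lemma inv_cont:
  fixes A :: "'p::metric_space \<Rightarrow> ('a::euclidean_space \<Rightarrow>\<^sub>L 'a)" and B :: "'p \<Rightarrow> 'a \<Rightarrow> 'a"
  assumes contA: "continuous_on S A" and cL: "cL > 0"
    and lb: "\<forall>p\<in>S. \<forall>v. cL * norm v \<le> norm (blinfun_apply (A p) v)"
    and bl: "\<forall>p\<in>S. bounded_linear (B p)"
    and ri: "\<forall>p\<in>S. \<forall>u. blinfun_apply (A p) (B p u) = u"
    and p0: "p0 \<in> S" and e: "e > 0"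
  shows "\<exists>d>0. \<forall>p\<in>S. dist p p0 < d \<longrightarrow> (\<forall>v. norm (B p v - B p0 v) \<le> e * norm v)"
proof -
  obtain d where d: "d > 0" "\<forall>p\<in>S. dist p p0 < d \<longrightarrow> dist (A p) (A p0) < e * cL^2"
    using contA p0 e cL unfolding continuous_on_iff by (metis mult_pos_pos zero_less_power)
  have Bb: "norm (B p z) \<le> norm z / cL" if "p \<in> S" for p z
  proof -
    have "cL * norm (B p z) \<le> norm z" using lb that ri by metis
    then show ?thesis using cL by (simp add: field_simps)
  qed
  have li: "B p (blinfun_apply (A p) u) = u" if "p \<in> S" for p u
  proof -
    have "blinfun_apply (A p) (B p (blinfun_apply (A p) u) - u) = 0"
      using ri that by (simp add: blinfun.diff_right)
    then have "cL * norm (B p (blinfun_apply (A p) u) - u) \<le> 0" using lb that by (metis norm_zero)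
    then show ?thesis using cL by (simp add: mult_le_0_iff)
  qed
  have "\<forall>p\<in>S. dist p p0 < d \<longrightarrow> (\<forall>v. norm (B p v - B p0 v) \<le> e * norm v)"
  proof (intro ballI impI allI)
    fix p v assume p: "p \<in> S" "dist p p0 < d"
    define u where "u = B p0 v"
    have v: "v = blinfun_apply (A p0) u" unfolding u_def using ri p0 by simp
    have blp: "bounded_linear (B p)" using bl p(1) by simp
    have lu: "B p (blinfun_apply (A p) u) = B p0 v" using li[OF p(1)] u_def by simp
    have "B p v - B p0 v = B p (blinfun_apply (A p0) u) - B p (blinfun_apply (A p) u)"
      by (metis lu v)
    also have "\<dots> = B p (blinfun_apply (A p0 - A p) u)"
      by (simp add: blinfun.diff_left linear_diff[OF bounded_linear.linear[OF blp]])
    finally have "B p v - B p0 v = B p (blinfun_apply (A p0 - A p) u)" .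
    also have "norm \<dots> \<le> norm (blinfun_apply (A p0 - A p) u) / cL" using Bb p by simp
    also have "\<dots> \<le> norm (A p0 - A p) * norm u / cL"
      using cL by (intro divide_right_mono norm_blinfun) auto
    also have "\<dots> \<le> (e * cL^2) * (norm v / cL) / cL"
    proof -
      have "norm (A p - A p0) < e * cL^2" using d p by (simp add: dist_norm)
      then have "norm (A p0 - A p) \<le> e * cL^2" by (simp add: norm_minus_commute)
      moreover have "norm u \<le> norm v / cL" unfolding u_def using Bb p0 by simp
      ultimately show ?thesis using cL e
        by (intro divide_right_mono mult_mono) auto
    qed
    also have "\<dots> = e * norm v" using cL by (simp add: power2_eq_square)
    finally show "norm (B p v - B p0 v) \<le> e * norm v" .
  qed
  then show ?thesis using d by blast
qed

locale cvx =
  fixes S :: "(real^'n) set" and F :: "real^'n \<Rightarrow> real" and Gr :: "real^'n \<Rightarrow> real^'n"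
    and H :: "real^'n \<Rightarrow> real^'n^'n" and \<kappa> :: real
  assumes S: "convex S" "open S"
    and dF: "\<And>x. x\<in>S \<Longrightarrow> (F has_derivative (\<lambda>h. Gr x \<bullet> h)) (at x)"
    and dG: "\<And>x. x\<in>S \<Longrightarrow> (Gr has_derivative (\<lambda>h. H x *v h)) (at x)"
    and pd: "\<And>x v. x\<in>S \<Longrightarrow> \<kappa> * (norm v)^2 \<le> v \<bullet> (H x *v v)"
    and kp: "\<kappa> > 0"
begin

lemma seg: "x \<in> S \<Longrightarrow> y \<in> S \<Longrightarrow> 0 \<le> t \<Longrightarrow> t \<le> 1 \<Longrightarrow> y + t *\<^sub>R (x - y) \<in> S"
proof -
  assume a: "x \<in> S" "y \<in> S" "0 \<le> t" "t \<le> 1"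
  have "(1-t) *\<^sub>R y + t *\<^sub>R x \<in> S" using S(1) a unfolding convex_def by simp
  moreover have "y + t *\<^sub>R (x - y) = (1-t) *\<^sub>R y + t *\<^sub>R x" by (simp add: algebra_simps)
  ultimately show ?thesis by simp
qed

lemma mono:
  assumes x: "x \<in> S" and y: "y \<in> S"
  shows "\<kappa> * (norm (x - y))^2 \<le> (Gr x - Gr y) \<bullet> (x - y)"
proof (cases "x = y")
  case True then show ?thesis by simp
next
  case False
  define d where "d = x - y"
  define \<psi> where "\<psi> t = Gr (y + t *\<^sub>R d) \<bullet> d" for t
  have der: "DERIV \<psi> t :> (H (y + t *\<^sub>R d) *v d) \<bullet> d" if "0 \<le> t" "t \<le> 1" for t
  proof -
    have inS: "y + t *\<^sub>R d \<in> S" using seg[OF x y that] d_def by simp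
    have l: "((\<lambda>t. y + t *\<^sub>R d) has_derivative (\<lambda>s. s *\<^sub>R d)) (at t)"
      by (auto intro!: derivative_eq_intros)
    have "((\<lambda>t. Gr (y + t *\<^sub>R d) \<bullet> d) has_derivative (\<lambda>s. (H (y + t *\<^sub>R d) *v (s *\<^sub>R d)) \<bullet> d)) (at t)"
      using has_derivative_inner_left[OF has_derivative_compose[OF l dG[OF inS]]] by simp
    then show ?thesis unfolding \<psi>_def has_field_derivative_def
      by (rule has_derivative_eq_rhs) (simp add: fun_eq_iff matrix_vector_mult_scaleR mult.commute)
  qed
  obtain z where z: "0 < z" "z < 1" "\<psi> 1 - \<psi> 0 = (1 - 0) * ((H (y + z *\<^sub>R d) *v d) \<bullet> d)"
    using MVT2[of 0 1 \<psi> "\<lambda>t. (H (y + t *\<^sub>R d) *v d) \<bullet> d"] der by auto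
  have "y + z *\<^sub>R d \<in> S" using seg[OF x y, of z] z d_def by simp
  then have "\<kappa> * (norm d)^2 \<le> (H (y + z *\<^sub>R d) *v d) \<bullet> d" using pd by (simp add: inner_commute)
  moreover have "\<psi> 1 - \<psi> 0 = (Gr x - Gr y) \<bullet> (x - y)" unfolding \<psi>_def d_def by (simp add: inner_diff_left)
  ultimately show ?thesis using z d_def by simp
qed

lemma minimizer:
  assumes x0: "x0 \<in> S" and g0: "Gr x0 = 0" and x: "x \<in> S"
  shows "F x0 \<le> F x" and "F x \<le> F x0 \<Longrightarrow> x = x0"
proof -
  define d where "d = x - x0"
  define ch where "ch t = F (x0 + t *\<^sub>R d)" for t
  have der: "DERIV ch t :> Gr (x0 + t *\<^sub>R d) \<bullet> d" if "0 \<le> t" "t \<le> 1" for t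
  proof -
    have inS: "x0 + t *\<^sub>R d \<in> S" using seg[OF x x0 that] d_def by simp
    have l: "((\<lambda>t. x0 + t *\<^sub>R d) has_derivative (\<lambda>s. s *\<^sub>R d)) (at t)"
      by (auto intro!: derivative_eq_intros)
    have "((\<lambda>t. F (x0 + t *\<^sub>R d)) has_derivative (\<lambda>s. Gr (x0 + t *\<^sub>R d) \<bullet> (s *\<^sub>R d))) (at t)"
      using has_derivative_compose[OF l dF[OF inS]] by simp
    then show ?thesis unfolding ch_def has_field_derivative_def
      by (rule has_derivative_eq_rhs) (simp add: fun_eq_iff mult.commute)
  qed
  obtain z where z: "0 < z" "z < 1" "ch 1 - ch 0 = (1 - 0) * (Gr (x0 + z *\<^sub>R d) \<bullet> d)"
    using MVT2[of 0 1 ch "\<lambda>t. Gr (x0 + t *\<^sub>R d) \<bullet> d"] der by auto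
  have zS: "x0 + z *\<^sub>R d \<in> S" using seg[OF x x0, of z] z d_def by simp
  have "\<kappa> * (norm (z *\<^sub>R d))^2 \<le> (Gr (x0 + z *\<^sub>R d) - Gr x0) \<bullet> (z *\<^sub>R d)"
    using mono[OF zS x0] by simp
  then have "\<kappa> * (z^2 * (norm d)^2) \<le> z * (Gr (x0 + z *\<^sub>R d) \<bullet> d)"
    using g0 z by (simp add: power_mult_distrib)
  then have "\<kappa> * z * (norm d)^2 \<le> Gr (x0 + z *\<^sub>R d) \<bullet> d"
    using z by (simp add: power2_eq_square field_simps)
  moreover have "ch 1 - ch 0 = F x - F x0" unfolding ch_def d_def by simp
  ultimately have key: "\<kappa> * z * (norm d)^2 \<le> F x - F x0" using z by simp
  have "0 \<le> \<kappa> * z * (norm d)^2" using kp z by simp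
  then show "F x0 \<le> F x" using key by simp
  show "x = x0" if "F x \<le> F x0"
  proof (rule ccontr)
    assume "x \<noteq> x0"
    then have "0 < \<kappa> * z * (norm d)^2" using kp z d_def by simp
    then show False using key that by simp
  qed
qed

end

lemma ev_cont: "isCont g x \<Longrightarrow> open S \<Longrightarrow> g x \<in> S \<Longrightarrow> eventually (\<lambda>y. g y \<in> S) (nhds x)"
  unfolding isCont_def tendsto_at_iff_tendsto_nhds by (rule topological_tendstoD)

lemma dist_pair_le: "dist (a, b) (c, d) \<le> dist a c + dist b d"
proof -
  have "dist (a, b) (c, d) \<le> dist (a, b) (c, b) + dist (c, b) (c, d)" by (rule dist_triangle)
  also have "\<dots> = dist a c + dist b d" by (simp add: dist_Pair_Pair)
  finally show ?thesis .
qed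

lemma norm_pair_le: "norm (a, b) \<le> norm a + norm b"
  using dist_pair_le[of a b 0 0] by (simp add: dist_norm flip: zero_prod_def)

lemma mv_bound: fixes X :: "real^'n^'m"
  shows "norm (X *v v) \<le> (\<Sum>i\<in>UNIV. \<Sum>j\<in>UNIV. \<bar>X $ i $ j\<bar>) * norm v"
proof -
  have "norm (X *v v) \<le> onorm ((*v) X) * norm v" by (rule onorm[OF matrix_vector_mul_bounded_linear])
  also have "\<dots> \<le> (\<Sum>i\<in>UNIV. \<Sum>j\<in>UNIV. \<bar>X $ i $ j\<bar>) * norm v"
    by (intro mult_right_mono onorm_le_matrix_component_sum) auto
  finally show ?thesis .
qed

context prob begin

lemma Hcont: "\<exists>r>0. \<forall>x\<in>ball xs r. isCont Hf x \<and> (\<forall>i. isCont (Hc i) x)"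
proof -
  obtain r L where r: "r > 0" and L: "\<forall>x\<in>ball xs r. \<forall>x'\<in>ball xs r.
          norm (Hf x - Hf x') \<le> L * norm (x - x') \<and> (\<forall>i. norm (Hc i x - Hc i x') \<le> L * norm (x - x'))"
    using lipschitz by blast
  have L': "norm (Hf x - Hf x') \<le> (\<bar>L\<bar>+1) * norm (x - x') \<and> (\<forall>i. norm (Hc i x - Hc i x') \<le> (\<bar>L\<bar>+1) * norm (x - x'))"
    if "x \<in> ball xs r" "x' \<in> ball xs r" for x x'
  proof -
    have "L * norm (x - x') \<le> (\<bar>L\<bar>+1) * norm (x - x')" by (intro mult_right_mono) auto
    then show ?thesis using L that by (meson order_trans)
  qed
  have cf: "continuous_on (ball xs r) Hf" "continuous_on (ball xs r) (Hc i)" for i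
    unfolding continuous_on_iff
  proof (safe)
    fix x e assume x: "x \<in> ball xs r" and e: "(0::real) < e"
    show "\<exists>d>0. \<forall>x'\<in>ball xs r. dist x' x < d \<longrightarrow> dist (Hf x') (Hf x) < e"
    proof (intro exI[of _ "e / (\<bar>L\<bar>+1)"] conjI ballI impI)
      show "0 < e / (\<bar>L\<bar>+1)" using e by simp
      fix x' assume x': "x' \<in> ball xs r" "dist x' x < e / (\<bar>L\<bar> + 1)"
      have "dist (Hf x') (Hf x) \<le> (\<bar>L\<bar>+1) * dist x' x" using L'[OF x'(1) x] by (simp add: dist_norm)
      also have "\<dots> < e" using x'(2) by (simp add: field_simps)
      finally show "dist (Hf x') (Hf x) < e" .
    qed
    show "\<exists>d>0. \<forall>x'\<in>ball xs r. dist x' x < d \<longrightarrow> dist (Hc i x') (Hc i x) < e"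
    proof (intro exI[of _ "e / (\<bar>L\<bar>+1)"] conjI ballI impI)
      show "0 < e / (\<bar>L\<bar>+1)" using e by simp
      fix x' assume x': "x' \<in> ball xs r" "dist x' x < e / (\<bar>L\<bar> + 1)"
      have "dist (Hc i x') (Hc i x) \<le> (\<bar>L\<bar>+1) * dist x' x" using L'[OF x'(1) x] by (simp add: dist_norm)
      also have "\<dots> < e" using x'(2) by (simp add: field_simps)
      finally show "dist (Hc i x') (Hc i x) < e" .
    qed
  qed
  show ?thesis using r cf by (auto simp: continuous_on_eq_continuous_at)
qed

lemma ctt: "isCont (\<lambda>w. tt i (fst w) (fst (snd w))) (w::(real^'n) \<times> ((real^'m) \<times> real))"
  by (rule has_derivative_continuous[OF dtt])
lemma cDc: "isCont (\<lambda>w. Dc i (fst w)) (w::(real^'n) \<times> ((real^'m) \<times> real))"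
  by (rule has_derivative_continuous[OF dDc_fst])
lemma cmu: "isCont (\<lambda>w::((real^'n) \<times> ((real^'m) \<times> real)). snd (snd w)) w"
  by (intro continuous_snd continuous_ident)

lemma cHM:
  assumes "isCont Hf x" "\<forall>i. isCont (Hc i) x" "\<forall>i. (tt i x s)^2 + 4*\<rho>*\<mu> \<noteq> 0"
  shows "isCont (\<lambda>w. HM (fst w) (fst (snd w)) (snd (snd w))) (x, (s, \<mu>))"
proof -
  have h1: "isCont (\<lambda>w. Hf (fst w)) (x, (s, \<mu>))" using assms(1) by (intro isCont_o2[where g=Hf, OF continuous_fst[OF continuous_ident]]) auto
  have h2: "isCont (\<lambda>w. Hc i (fst w)) (x, (s, \<mu>))" for i using assms(2) by (intro isCont_o2[where g="Hc i", OF continuous_fst[OF continuous_ident]]) auto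
  have h3: "isCont (\<lambda>w. phit \<rho> (tt i (fst w) (fst (snd w))) (snd (snd w))) (x, (s, \<mu>))" for i
    using assms(3) by (intro cont_phit ctt cmu) auto
  have h4: "isCont (\<lambda>w. phi \<rho> (tt i (fst w) (fst (snd w))) (snd (snd w))) (x, (s, \<mu>))" for i
    by (intro cont_phi ctt cmu)
  show ?thesis unfolding HM_def
    by (intro continuous_add continuous_diff continuous_sum continuous_scaleR continuous_const
        h1 h2 h3 h4 cont_outer cDc)
qed

definition aa where "aa = Min (range (\<lambda>i. \<bar>tt i xs ss\<bar>)) / 2"

lemma aa_le: "2 * aa \<le> \<bar>tt i xs ss\<bar>"
proof -
  have "Min (range (\<lambda>i. \<bar>tt i xs ss\<bar>)) \<le> \<bar>tt i xs ss\<bar>" by (rule Min_le) auto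
  then show ?thesis unfolding aa_def by simp
qed

lemma aa_pos: "aa > 0"
proof -
  have "0 < Min (range (\<lambda>i. \<bar>tt i xs ss\<bar>))"
    using tstar_nz by (subst Min_gr_iff) auto
  then show ?thesis unfolding aa_def by simp
qed


lemma nbhd:
  assumes r: "r > 0" "\<forall>x\<in>ball xs r. isCont Hf x \<and> (\<forall>i. isCont (Hc i) x)" and k: "\<kappa>0 > 0"
  shows "\<exists>e>0. \<forall>x s \<mu>. dist (x,(s,\<mu>)) (xs,(ss,0::real)) < e \<longrightarrow>
     x \<in> ball xs r \<and> (\<forall>i. \<bar>tt i x s - tt i xs ss\<bar> < aa) \<and> \<bar>\<mu>\<bar> < aa^2/(8*\<rho>)
     \<and> (\<Sum>i\<in>UNIV. \<Sum>j\<in>UNIV. \<bar>(HM x s \<mu> - BM)$i$j\<bar>) < \<kappa>0/2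
     \<and> (\<forall>i. norm (Dc i x - Dc i xs) < 1)"
proof -
  define w0 :: "(real^'n) \<times> ((real^'m) \<times> real)" where "w0 = (xs,(ss,0))"
  have e1: "eventually (\<lambda>w. fst w \<in> ball xs r) (nhds w0)"
    by (rule ev_cont) (auto simp: w0_def r intro: continuous_intros)
  have e2: "eventually (\<lambda>w. \<forall>i. \<bar>tt i (fst w) (fst (snd w)) - tt i xs ss\<bar> \<in> {..<aa}) (nhds w0)"
  proof (rule eventually_all_finite)
    fix i
    show "eventually (\<lambda>w. \<bar>tt i (fst w) (fst (snd w)) - tt i xs ss\<bar> \<in> {..<aa}) (nhds w0)"
      by (rule ev_cont) (auto simp: w0_def aa_pos intro!: continuous_rabs continuous_diff ctt continuous_const)
  qed
  have p3: "0 < aa^2/(8*\<rho>)" using aa_pos rho0_pos by simp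
  have e3: "eventually (\<lambda>w. \<bar>snd (snd w)\<bar> \<in> {..<aa^2/(8*\<rho>)}) (nhds w0)"
    by (rule ev_cont) (auto simp: w0_def p3 intro!: continuous_rabs cmu)
  have hm: "HM xs ss 0 - BM = 0" using HM_star by simp
  have cH: "isCont (\<lambda>w. HM (fst w) (fst (snd w)) (snd (snd w))) w0"
    unfolding w0_def using r tstar_nz by (intro cHM) auto
  have e4: "eventually (\<lambda>w. (\<Sum>i\<in>UNIV. \<Sum>j\<in>UNIV. \<bar>(HM (fst w) (fst (snd w)) (snd (snd w)) - BM)$i$j\<bar>) \<in> {..<\<kappa>0/2}) (nhds w0)"
  proof (rule ev_cont)
    show "isCont (\<lambda>w. (\<Sum>i\<in>UNIV. \<Sum>j\<in>UNIV. \<bar>(HM (fst w) (fst (snd w)) (snd (snd w)) - BM)$i$j\<bar>)) w0"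
      by (intro continuous_sum continuous_rabs continuous_component continuous_diff cH continuous_const)
    have "HM (fst w0) (fst (snd w0)) (snd (snd w0)) - BM = 0" using hm by (simp add: w0_def)
    then show "(\<Sum>i\<in>UNIV. \<Sum>j\<in>UNIV. \<bar>(HM (fst w0) (fst (snd w0)) (snd (snd w0)) - BM)$i$j\<bar>) \<in> {..<\<kappa>0/2}"
      using k by simp
  qed simp
  have e5: "eventually (\<lambda>w. \<forall>i. norm (Dc i (fst w) - Dc i xs) \<in> {..<1}) (nhds w0)"
  proof (rule eventually_all_finite)
    fix i
    show "eventually (\<lambda>w. norm (Dc i (fst w) - Dc i xs) \<in> {..<1}) (nhds w0)"
      by (rule ev_cont) (auto simp: w0_def intro!: continuous_norm continuous_diff cDc continuous_const)
  qed
  have "eventually (\<lambda>w. fst w \<in> ball xs r \<and> (\<forall>i. \<bar>tt i (fst w) (fst (snd w)) - tt i xs ss\<bar> \<in> {..<aa})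
     \<and> \<bar>snd (snd w)\<bar> \<in> {..<aa^2/(8*\<rho>)}
     \<and> (\<Sum>i\<in>UNIV. \<Sum>j\<in>UNIV. \<bar>(HM (fst w) (fst (snd w)) (snd (snd w)) - BM)$i$j\<bar>) \<in> {..<\<kappa>0/2}
     \<and> (\<forall>i. norm (Dc i (fst w) - Dc i xs) \<in> {..<1})) (nhds w0)"
    using e1 e2 e3 e4 e5 by (intro eventually_conj)
  then obtain e where "e > 0" and e: "\<forall>w. dist w w0 < e \<longrightarrow> fst w \<in> ball xs r \<and> (\<forall>i. \<bar>tt i (fst w) (fst (snd w)) - tt i xs ss\<bar> \<in> {..<aa})
     \<and> \<bar>snd (snd w)\<bar> \<in> {..<aa^2/(8*\<rho>)}
     \<and> (\<Sum>i\<in>UNIV. \<Sum>j\<in>UNIV. \<bar>(HM (fst w) (fst (snd w)) (snd (snd w)) - BM)$i$j\<bar>) \<in> {..<\<kappa>0/2}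
     \<and> (\<forall>i. norm (Dc i (fst w) - Dc i xs) \<in> {..<1})"
    unfolding eventually_nhds_metric by (elim exE conjE) (rule that)
  show ?thesis
  proof (intro exI[of _ e] allI impI conjI[of "e > 0"])
    show "e > 0" by fact
    fix x s \<mu> assume "dist (x,(s,\<mu>)) (xs,(ss,0::real)) < e"
    then have "dist (x,(s,\<mu>)) w0 < e" by (simp add: w0_def)
    from e[rule_format, OF this] show "x \<in> ball xs r \<and> (\<forall>i. \<bar>tt i x s - tt i xs ss\<bar> < aa) \<and> \<bar>\<mu>\<bar> < aa^2/(8*\<rho>)
      \<and> (\<Sum>i\<in>UNIV. \<Sum>j\<in>UNIV. \<bar>(HM x s \<mu> - BM)$i$j\<bar>) < \<kappa>0/2 \<and> (\<forall>i. norm (Dc i x - Dc i xs) < 1)"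
      by auto
  qed
qed


lemma sq_ge: assumes "a > 0" "a \<le> \<bar>t\<bar>" "t^2/2 \<le> t^2 + 4*\<rho>*\<mu>"
  shows "\<bar>t\<bar>/2 \<le> sqrt (t^2 + 4*\<rho>*\<mu>)"
proof -
  have "(\<bar>t\<bar>/2)^2 \<le> t^2 + 4*\<rho>*\<mu>" using assms(3) by (simp add: power_divide) (smt (verit) zero_le_power2)
  then show ?thesis by (metis abs_ge_zero real_le_rsqrt divide_nonneg_pos zero_less_numeral)
qed

lemma phit_bd: assumes "a > 0" "a \<le> \<bar>t\<bar>" "t^2/2 \<le> t^2 + 4*\<rho>*\<mu>"
  shows "\<bar>phit \<rho> t \<mu>\<bar> \<le> 2"
proof -
  have s: "\<bar>t\<bar>/2 \<le> sqrt (t^2 + 4*\<rho>*\<mu>)" by (rule sq_ge[OF assms])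
  have sp: "sqrt (t^2 + 4*\<rho>*\<mu>) > 0" using s assms by linarith
  define u where "u = t / sqrt (t^2 + 4*\<rho>*\<mu>)"
  have "\<bar>u\<bar> \<le> 2" unfolding u_def using s sp by (simp add: abs_divide divide_le_eq)
  then have "u \<le> 2" "-u \<le> 2" using abs_le_D1 abs_le_D2 by blast+
  moreover have "phit \<rho> t \<mu> = (1 + u)/2" unfolding phit_def u_def by simp
  ultimately show ?thesis by (simp add: abs_le_iff)
qed

lemma phim_bd: assumes "\<rho> > 0" "a > 0" "a \<le> \<bar>t\<bar>" "t^2/2 \<le> t^2 + 4*\<rho>*\<mu>"
  shows "\<bar>phim \<rho> t \<mu>\<bar> \<le> 2*\<rho>/a"
proof -
  have s: "\<bar>t\<bar>/2 \<le> sqrt (t^2 + 4*\<rho>*\<mu>)" by (rule sq_ge[OF assms(2-4)])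
  have s2: "a/2 \<le> sqrt (t^2 + 4*\<rho>*\<mu>)" using s assms by linarith
  have sp: "sqrt (t^2 + 4*\<rho>*\<mu>) > 0" using s2 assms by linarith
  have "\<rho> / sqrt (t^2 + 4*\<rho>*\<mu>) \<le> \<rho> / (a/2)" using s2 sp assms by (intro divide_left_mono) auto
  then show ?thesis unfolding phim_def using assms sp by (simp add: mult.commute)
qed

lemma t_ge: "\<bar>tt i x s - tt i xs ss\<bar> < aa \<Longrightarrow> aa < \<bar>tt i x s\<bar>"
  using aa_le[of i] by linarith

lemma q_ge: assumes "aa \<le> \<bar>t\<bar>" "\<bar>\<mu>\<bar> < aa^2/(8*\<rho>)"
  shows "t^2/2 \<le> t^2 + 4*\<rho>*\<mu>" "0 < t^2 + 4*\<rho>*\<mu>"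
proof -
  have "aa^2 \<le> t^2" using assms(1) aa_pos by (metis abs_ge_zero abs_of_pos power2_abs power_mono)
  moreover have "\<bar>4*\<rho>*\<mu>\<bar> < aa^2/2" using assms(2) rho0_pos by (simp add: abs_mult field_simps)
  moreover have "0 < aa^2" using aa_pos by simp
  ultimately show "t^2/2 \<le> t^2 + 4*\<rho>*\<mu>" "0 < t^2 + 4*\<rho>*\<mu>" by (simp_all add: abs_less_iff)
qed

lemma pd_U: assumes kap: "\<forall>v. \<kappa>0 * (norm v)^2 \<le> v \<bullet> (BM *v v)"
  and K: "(\<Sum>i\<in>UNIV. \<Sum>j\<in>UNIV. \<bar>(HM x s \<mu> - BM)$i$j\<bar>) < \<kappa>0/2"
  shows "\<kappa>0/2 * (norm v)^2 \<le> v \<bullet> (HM x s \<mu> *v v)"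
proof -
  define X where "X = HM x s \<mu> - BM"
  have "\<bar>v \<bullet> (X *v v)\<bar> \<le> norm v * norm (X *v v)" by (rule Cauchy_Schwarz_ineq2)
  also have "\<dots> \<le> norm v * ((\<Sum>i\<in>UNIV. \<Sum>j\<in>UNIV. \<bar>X $ i $ j\<bar>) * norm v)" by (intro mult_left_mono mv_bound) auto
  also have "\<dots> \<le> norm v * (\<kappa>0/2 * norm v)" using K unfolding X_def by (intro mult_left_mono mult_right_mono) auto
  finally have b: "\<bar>v \<bullet> (X *v v)\<bar> \<le> \<kappa>0/2 * (norm v)^2" by (simp add: power2_eq_square mult_ac)
  have "v \<bullet> (HM x s \<mu> *v v) = v \<bullet> (BM *v v) + v \<bullet> (X *v v)"
    unfolding X_def by (simp add: matrix_vector_mult_diff_rdistrib inner_diff_right)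
  then show ?thesis using b kap[rule_format, of v] by (simp add: abs_le_iff)
qed


definition Mb where "Mb = 2 * (\<Sum>i\<in>UNIV. (2 + 2*\<rho>/aa) * (norm (Dc i xs) + 1))"

lemma Mb_nn: "Mb \<ge> 0"
  unfolding Mb_def using aa_pos rho0_pos by (intro mult_nonneg_nonneg sum_nonneg) auto

lemma GP_bd:
  assumes tg: "\<forall>i. aa \<le> \<bar>tt i x s\<bar>" and q: "\<forall>i. (tt i x s)^2/2 \<le> (tt i x s)^2 + 4*\<rho>*\<mu>"
    and D: "\<forall>i. norm (Dc i x) \<le> norm (Dc i xs) + 1"
  shows "norm (GP x s \<mu> k m) \<le> Mb * norm (k, m)"
proof -
  have trm: "norm ((phit \<rho> (tt i x s) \<mu> * k$i + phim \<rho> (tt i x s) \<mu> * m) *\<^sub>R Dc i x)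
     \<le> ((2 + 2*\<rho>/aa) * (norm (Dc i xs) + 1)) * (norm k + norm m)" for i
  proof -
    have a1: "\<bar>phit \<rho> (tt i x s) \<mu>\<bar> \<le> 2" using phit_bd[OF aa_pos] tg q by blast
    have a2: "\<bar>phim \<rho> (tt i x s) \<mu>\<bar> \<le> 2*\<rho>/aa" using phim_bd[OF rho0_pos aa_pos] tg q by blast
    have k1: "\<bar>k$i\<bar> \<le> norm k" by (rule component_le_norm_cart)
    have "\<bar>phit \<rho> (tt i x s) \<mu> * k$i + phim \<rho> (tt i x s) \<mu> * m\<bar>
        \<le> \<bar>phit \<rho> (tt i x s) \<mu>\<bar> * \<bar>k$i\<bar> + \<bar>phim \<rho> (tt i x s) \<mu>\<bar> * \<bar>m\<bar>"
      by (metis abs_mult abs_triangle_ineq)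
    also have "\<dots> \<le> 2 * norm k + (2*\<rho>/aa) * \<bar>m\<bar>"
      using a1 a2 k1 by (intro add_mono mult_mono) auto
    also have "\<dots> \<le> (2 + 2*\<rho>/aa) * (norm k + norm m)"
    proof -
      have e: "(2 + 2*\<rho>/aa) * (norm k + norm m) = 2 * norm k + (2*\<rho>/aa) * \<bar>m\<bar> + (2 * \<bar>m\<bar> + (2*\<rho>/aa) * norm k)"
        by (simp add: algebra_simps add_divide_distrib)
      have "0 \<le> (2*\<rho>/aa) * norm k" using aa_pos rho0_pos by simp
      then show ?thesis unfolding e by simp
    qed
    finally have c1: "\<bar>phit \<rho> (tt i x s) \<mu> * k$i + phim \<rho> (tt i x s) \<mu> * m\<bar> \<le> (2 + 2*\<rho>/aa) * (norm k + norm m)" .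
    have "norm ((phit \<rho> (tt i x s) \<mu> * k$i + phim \<rho> (tt i x s) \<mu> * m) *\<^sub>R Dc i x)
        = \<bar>phit \<rho> (tt i x s) \<mu> * k$i + phim \<rho> (tt i x s) \<mu> * m\<bar> * norm (Dc i x)" by simp
    also have "\<dots> \<le> ((2 + 2*\<rho>/aa) * (norm k + norm m)) * (norm (Dc i xs) + 1)"
      using c1 D by (intro mult_mono) auto
    finally show ?thesis by (simp add: mult_ac)
  qed
  have "norm (GP x s \<mu> k m) \<le> (\<Sum>i\<in>UNIV. ((2 + 2*\<rho>/aa) * (norm (Dc i xs) + 1)) * (norm k + norm m))"
    unfolding GP_def by (rule order_trans[OF norm_sum sum_mono]) (rule trm)
  also have "\<dots> = (Mb/2) * (norm k + norm m)" unfolding Mb_def by (simp add: sum_distrib_right)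
  also have "\<dots> \<le> (Mb/2) * (2 * norm (k, m))"
  proof -
    have "norm k \<le> norm (k, m)" "norm m \<le> norm (k, m)" by (rule norm_fst_le, rule norm_snd_le)
    then show ?thesis using Mb_nn by (intro mult_left_mono) auto
  qed
  finally show ?thesis by simp
qed

lemma lowb:
  assumes tg: "\<forall>i. aa \<le> \<bar>tt i x s\<bar>" and q: "\<forall>i. (tt i x s)^2/2 \<le> (tt i x s)^2 + 4*\<rho>*\<mu>"
    and D: "\<forall>i. norm (Dc i x) \<le> norm (Dc i xs) + 1"
    and pd: "\<forall>v. \<kappa> * (norm v)^2 \<le> v \<bullet> (HM x s \<mu> *v v)" and kp: "\<kappa> > 0"
  shows "\<kappa> / (1 + Mb + \<kappa>) * norm v \<le> norm (GD (x,(s,\<mu>)) v, snd v)"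
proof -
  obtain h k m where v: "v = (h, (k, m))" by (metis prod.collapse)
  define N where "N = norm (GD (x,(s,\<mu>)) v, snd v)"
  have Nq: "norm (k, m) \<le> N" unfolding N_def v by (simp add: norm_snd_le)
  have NG: "norm (GD (x,(s,\<mu>)) v) \<le> N" unfolding N_def by (rule norm_fst_le)
  have hm: "\<kappa> * norm h \<le> norm (HM x s \<mu> *v h)"
  proof (cases "h = 0")
    case False
    have "\<kappa> * (norm h)^2 \<le> h \<bullet> (HM x s \<mu> *v h)" using pd by simp
    also have "\<dots> \<le> norm h * norm (HM x s \<mu> *v h)" by (rule Cauchy_Schwarz_ineq2[THEN abs_le_D1])
    finally show ?thesis using False by (simp add: power2_eq_square mult_ac)
  qed simp
  have gd: "GD (x,(s,\<mu>)) v = HM x s \<mu> *v h - GP x s \<mu> k m" unfolding GD_def v by simp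
  have "norm (HM x s \<mu> *v h) \<le> norm (GD (x,(s,\<mu>)) v) + norm (GP x s \<mu> k m)"
    unfolding gd by (metis norm_triangle_sub add.commute)
  then have "\<kappa> * norm h \<le> N + Mb * N"
    using hm NG GP_bd[OF tg q D, of k m] Nq Mb_nn
    by (smt (verit) mult_left_mono)
  moreover have "norm v \<le> norm h + norm (k, m)" unfolding v by (rule norm_pair_le)
  ultimately have "\<kappa> * norm v \<le> (1 + Mb + \<kappa>) * N"
  proof -
    assume a1: "\<kappa> * norm h \<le> N + Mb * N" and a2: "norm v \<le> norm h + norm (k, m)"
    have "\<kappa> * norm v \<le> \<kappa> * (norm h + norm (k, m))" using a2 kp by (intro mult_left_mono) auto
    moreover have "\<kappa> * norm (k, m) \<le> \<kappa> * N" using Nq kp by (intro mult_left_mono) auto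
    moreover have "(1 + Mb + \<kappa>) * N = N + Mb * N + \<kappa> * N" by (simp add: algebra_simps)
    ultimately show ?thesis using a1 by (simp add: algebra_simps)
  qed
  then show ?thesis unfolding N_def using kp Mb_nn by (simp add: field_simps)
qed


lemma c_lip:
  assumes D: "\<forall>x\<in>ball xs R. norm (Dc i x) \<le> norm (Dc i xs) + 1" and x: "x \<in> ball xs R"
  shows "\<bar>c x $ i - c xs $ i\<bar> \<le> (norm (Dc i xs) + 1) * norm (x - xs)"
proof -
  have "0 \<le> dist xs x" by simp
  then have "0 < R" using x unfolding mem_ball by linarith
  then have xs: "xs \<in> ball xs R" by simp
  have "norm (c x $ i - c xs $ i) \<le> (norm (Dc i xs) + 1) * norm (x - xs)"
  proof (rule differentiable_bound[OF convex_ball _ _ x xs])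
    fix y assume y: "y \<in> ball xs R"
    show "((\<lambda>x. c x $ i) has_derivative (\<lambda>h. Dc i y \<bullet> h)) (at y within ball xs R)"
      by (rule has_derivative_at_withinI[OF c_grad])
    show "onorm (\<lambda>h. Dc i y \<bullet> h) \<le> norm (Dc i xs) + 1"
    proof (rule onorm_le)
      fix h
      have "norm (Dc i y \<bullet> h) \<le> norm (Dc i y) * norm h" by (simp add: Cauchy_Schwarz_ineq2)
      also have "\<dots> \<le> (norm (Dc i xs) + 1) * norm h" using D y by (intro mult_right_mono) auto
      finally show "norm (Dc i y \<bullet> h) \<le> (norm (Dc i xs) + 1) * norm h" .
    qed
  qed
  then show ?thesis by simp
qed

lemma G_xs_bound:
  assumes mu: "\<mu> \<ge> 0" and tg: "\<forall>i. aa \<le> \<bar>tt i xs s\<bar>"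
  shows "norm (G xs s \<mu>) \<le> (\<Sum>i\<in>UNIV. norm (Dc i xs)) * (1 + 2*\<rho>/aa) * (norm (s - ss) + \<mu>)"
proof -
  have "G xs s \<mu> = G xs s \<mu> - G xs ss 0" using G_star by simp
  also have "\<dots> = (\<Sum>i\<in>UNIV. (phi \<rho> (tt i xs ss) 0 - phi \<rho> (tt i xs s) \<mu>) *\<^sub>R Dc i xs)"
    unfolding G_def by (simp add: sum_subtractf scaleR_diff_left)
  finally have eq: "G xs s \<mu> = (\<Sum>i\<in>UNIV. (phi \<rho> (tt i xs ss) 0 - phi \<rho> (tt i xs s) \<mu>) *\<^sub>R Dc i xs)" .
  have trm: "norm ((phi \<rho> (tt i xs ss) 0 - phi \<rho> (tt i xs s) \<mu>) *\<^sub>R Dc i xs)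
      \<le> norm (Dc i xs) * ((1 + 2*\<rho>/aa) * (norm (s - ss) + \<mu>))" for i
  proof -
    have "\<bar>phi \<rho> (tt i xs s) \<mu> - phi \<rho> (tt i xs ss) 0\<bar> \<le> \<bar>tt i xs s - tt i xs ss\<bar> + 2*\<rho>*\<mu>/aa"
      using phi_lip[OF rho0_pos aa_pos mu] tg by blast
    also have "\<bar>tt i xs s - tt i xs ss\<bar> = \<bar>(s - ss) $ i\<bar>" by (simp add: tt_def)
    also have "\<bar>(s - ss) $ i\<bar> \<le> norm (s - ss)" by (rule component_le_norm_cart)
    finally have "\<bar>phi \<rho> (tt i xs s) \<mu> - phi \<rho> (tt i xs ss) 0\<bar> \<le> norm (s - ss) + 2*\<rho>*\<mu>/aa" by simp
    also have "\<dots> \<le> (1 + 2*\<rho>/aa) * (norm (s - ss) + \<mu>)"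
    proof -
      have "0 \<le> 2*\<rho>/aa * norm (s - ss) + \<mu>" using mu aa_pos rho0_pos by simp
      then show ?thesis by (simp add: algebra_simps add_divide_distrib)
    qed
    finally have "\<bar>phi \<rho> (tt i xs ss) 0 - phi \<rho> (tt i xs s) \<mu>\<bar> \<le> (1 + 2*\<rho>/aa) * (norm (s - ss) + \<mu>)"
      by (simp add: abs_minus_commute)
    then show ?thesis by (simp add: mult.commute mult_left_mono)
  qed
  have "norm (G xs s \<mu>) \<le> (\<Sum>i\<in>UNIV. norm (Dc i xs) * ((1 + 2*\<rho>/aa) * (norm (s - ss) + \<mu>)))"
    unfolding eq by (rule order_trans[OF norm_sum sum_mono]) (rule trm)
  also have "\<dots> = (\<Sum>i\<in>UNIV. norm (Dc i xs)) * ((1 + 2*\<rho>/aa) * (norm (s - ss) + \<mu>))"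
    by (rule sum_distrib_right[symmetric])
  finally show ?thesis by (simp only: mult.assoc)
qed

lemma ytilde_bound:
  assumes mu: "\<mu> \<ge> 0" and tg: "\<forall>i. aa \<le> \<bar>tt i x s\<bar>"
    and cl: "\<forall>i. \<bar>c x $ i - c xs $ i\<bar> \<le> (norm (Dc i xs) + 1) * norm (x - xs)"
  shows "norm (\<rho> *\<^sub>R yvec c x s \<mu> \<rho> - ss) \<le> real CARD('m) * (1 + 2*\<rho>/aa) * (norm (s - ss) + \<mu>)
     + \<rho> * (\<Sum>i\<in>UNIV. norm (Dc i xs) + 1) * norm (x - xs)"
proof -
  have trm: "\<bar>(\<rho> *\<^sub>R yvec c x s \<mu> \<rho> - ss) $ i\<bar> \<le> (1 + 2*\<rho>/aa) * (norm (s - ss) + \<mu>)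
      + \<rho> * (norm (Dc i xs) + 1) * norm (x - xs)" for i
  proof -
    have e: "(\<rho> *\<^sub>R yvec c x s \<mu> \<rho> - ss) $ i = phi \<rho> (tt i x s) \<mu> - phi \<rho> (tt i xs ss) 0"
      using yfun_phi[OF rho0_pos, of c x s \<mu> i] phi_star[of i] by (simp add: yvec_def tt_def)
    have "\<bar>phi \<rho> (tt i x s) \<mu> - phi \<rho> (tt i xs ss) 0\<bar> \<le> \<bar>tt i x s - tt i xs ss\<bar> + 2*\<rho>*\<mu>/aa"
      using phi_lip[OF rho0_pos aa_pos mu] tg by blast
    also have "\<bar>tt i x s - tt i xs ss\<bar> \<le> \<bar>(s - ss) $ i\<bar> + \<rho> * \<bar>c x $ i - c xs $ i\<bar>"
    proof -
      have "tt i x s - tt i xs ss = (s - ss) $ i - \<rho> * (c x $ i - c xs $ i)" by (simp add: tt_def algebra_simps)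
      then have "\<bar>tt i x s - tt i xs ss\<bar> \<le> \<bar>(s - ss) $ i\<bar> + \<bar>\<rho> * (c x $ i - c xs $ i)\<bar>"
        by (metis abs_triangle_ineq4)
      then show ?thesis using rho0_pos by (simp add: abs_mult)
    qed
    also have "\<bar>(s - ss) $ i\<bar> \<le> norm (s - ss)" by (rule component_le_norm_cart)
    also have "\<rho> * \<bar>c x $ i - c xs $ i\<bar> \<le> \<rho> * ((norm (Dc i xs) + 1) * norm (x - xs))"
      using cl rho0_pos by (intro mult_left_mono) auto
    finally have "\<bar>phi \<rho> (tt i x s) \<mu> - phi \<rho> (tt i xs ss) 0\<bar> \<le> norm (s - ss) + \<rho> * ((norm (Dc i xs) + 1) * norm (x - xs)) + 2*\<rho>*\<mu>/aa"
      by simp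
    moreover have "norm (s - ss) + 2*\<rho>*\<mu>/aa \<le> (1 + 2*\<rho>/aa) * (norm (s - ss) + \<mu>)"
    proof -
      have "0 \<le> 2*\<rho>/aa * norm (s - ss) + \<mu>" using mu aa_pos rho0_pos by simp
      then show ?thesis by (simp add: algebra_simps add_divide_distrib)
    qed
    ultimately show ?thesis unfolding e by (simp add: mult_ac)
  qed
  have "norm (\<rho> *\<^sub>R yvec c x s \<mu> \<rho> - ss) \<le> (\<Sum>i\<in>UNIV. \<bar>(\<rho> *\<^sub>R yvec c x s \<mu> \<rho> - ss) $ i\<bar>)"
    by (rule norm_le_l1_cart)
  also have "\<dots> \<le> (\<Sum>i\<in>UNIV. (1 + 2*\<rho>/aa) * (norm (s - ss) + \<mu>) + \<rho> * (norm (Dc i xs) + 1) * norm (x - xs))"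
    by (rule sum_mono) (rule trm)
  also have "\<dots> = real CARD('m) * (1 + 2*\<rho>/aa) * (norm (s - ss) + \<mu>)
     + \<rho> * (\<Sum>i\<in>UNIV. norm (Dc i xs) + 1) * norm (x - xs)"
  proof -
    have a: "(\<Sum>i\<in>UNIV. \<rho> * (norm (Dc i xs) + 1) * norm (x - xs)) = (\<Sum>i\<in>UNIV. \<rho> * (norm (Dc i xs) + 1)) * norm (x - xs)"
      by (rule sum_distrib_right[symmetric])
    have b: "(\<Sum>i\<in>UNIV. \<rho> * (norm (Dc i xs) + 1)) = \<rho> * (\<Sum>i\<in>UNIV. norm (Dc i xs) + 1)"
      by (rule sum_distrib_left[symmetric])
    have c: "(\<Sum>i\<in>(UNIV::'m set). (1 + 2*\<rho>/aa) * (norm (s - ss) + \<mu>)) = real CARD('m) * (1 + 2*\<rho>/aa) * (norm (s - ss) + \<mu>)"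
      by simp
    show ?thesis unfolding sum.distrib a b c ..
  qed
  finally show ?thesis .
qed

end

context prob begin


theorem main:
  "\<exists>\<mu>b>0. \<exists>\<epsilon>>0. \<exists>\<delta>>0.
     (let D = {(s, \<mu>). norm (s - ss) \<le> \<delta> \<and> 0 \<le> \<mu> \<and> \<mu> < \<mu>b} in
      \<exists>xf :: (real^'m) \<times> real \<Rightarrow> real^'n.
        (\<forall>(s, \<mu>)\<in>D. xf (s, \<mu>) \<in> ball xs \<epsilon> \<and>
            (\<forall>x\<in>ball xs \<epsilon>. Ffun f c (xf (s, \<mu>)) s \<mu> \<rho> \<le> Ffun f c x s \<mu> \<rho>) \<and>
            (\<forall>x\<in>ball xs \<epsilon>. Ffun f c x s \<mu> \<rho> \<le> Ffun f c (xf (s, \<mu>)) s \<mu> \<rho> \<longrightarrow> x = xf (s, \<mu>)))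
        \<and> (\<exists>D' :: (real^'m) \<times> real \<Rightarrow> (((real^'m) \<times> real) \<Rightarrow>\<^sub>L (real^'n)).
              (\<forall>p\<in>interior D. (xf has_derivative blinfun_apply (D' p)) (at p))
              \<and> continuous_on (interior D) D')
        \<and> (\<exists>C>0. \<forall>(s, \<mu>)\<in>D.
              norm (xf (s, \<mu>) - xs) \<le> C * (norm (s - ss) + \<mu>) \<and>
              norm (\<rho> *\<^sub>R yvec c (xf (s, \<mu>)) s \<mu> \<rho> - ss) \<le> C * (norm (s - ss) + \<mu>)))"
proof -
  obtain r where r: "r > 0" "\<forall>x\<in>ball xs r. isCont Hf x \<and> (\<forall>i. isCont (Hc i) x)" using Hcont by blast
  obtain \<kappa>0 where k0: "\<kappa>0 > 0" "\<forall>v. \<kappa>0 * (norm v)^2 \<le> v \<bullet> (BM *v v)" using kappa0 by blast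
  obtain e where e: "e > 0" and P: "\<forall>x s \<mu>. dist (x,(s,\<mu>)) (xs,(ss,0::real)) < e \<longrightarrow>
     x \<in> ball xs r \<and> (\<forall>i. \<bar>tt i x s - tt i xs ss\<bar> < aa) \<and> \<bar>\<mu>\<bar> < aa^2/(8*\<rho>)
     \<and> (\<Sum>i\<in>UNIV. \<Sum>j\<in>UNIV. \<bar>(HM x s \<mu> - BM)$i$j\<bar>) < \<kappa>0/2
     \<and> (\<forall>i. norm (Dc i x - Dc i xs) < 1)"
    using nbhd[OF r k0(1)] by blast
  define \<kappa> where "\<kappa> = \<kappa>0/2"
  have kp: "\<kappa> > 0" using k0 by (simp add: \<kappa>_def)
  define U :: "((real^'n) \<times> ((real^'m) \<times> real)) set" where "U = ball xs (e/2) \<times> ball (ss, 0) (e/2)"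
  have U_open: "open U" unfolding U_def by (intro open_Times open_ball)
  have PU: "x \<in> ball xs r \<and> (\<forall>i. aa \<le> \<bar>tt i x s\<bar>) \<and> (\<forall>i. (tt i x s)^2/2 \<le> (tt i x s)^2 + 4*\<rho>*\<mu>)
      \<and> (\<forall>i. 0 < (tt i x s)^2 + 4*\<rho>*\<mu>) \<and> (\<forall>v. \<kappa> * (norm v)^2 \<le> v \<bullet> (HM x s \<mu> *v v))
      \<and> (\<forall>i. norm (Dc i x) \<le> norm (Dc i xs) + 1)"
    if "(x,(s,\<mu>)) \<in> U" for x s \<mu>
  proof -
    have "dist (x,(s,\<mu>)) (xs,(ss,0::real)) \<le> dist x xs + dist (s,\<mu>) (ss,0)" by (rule dist_pair_le)
    also have "\<dots> < e" using that unfolding U_def by (simp add: dist_commute)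
    finally have Pw: "x \<in> ball xs r \<and> (\<forall>i. \<bar>tt i x s - tt i xs ss\<bar> < aa) \<and> \<bar>\<mu>\<bar> < aa^2/(8*\<rho>)
     \<and> (\<Sum>i\<in>UNIV. \<Sum>j\<in>UNIV. \<bar>(HM x s \<mu> - BM)$i$j\<bar>) < \<kappa>0/2
     \<and> (\<forall>i. norm (Dc i x - Dc i xs) < 1)" using P by blast
    have tg: "\<forall>i. aa \<le> \<bar>tt i x s\<bar>" using Pw t_ge by (meson less_imp_le)
    have q: "\<forall>i. (tt i x s)^2/2 \<le> (tt i x s)^2 + 4*\<rho>*\<mu> \<and> 0 < (tt i x s)^2 + 4*\<rho>*\<mu>"
      using tg Pw q_ge by blast
    have pd: "\<forall>v. \<kappa> * (norm v)^2 \<le> v \<bullet> (HM x s \<mu> *v v)"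
      unfolding \<kappa>_def using pd_U[OF k0(2)] Pw by blast
    have D: "\<forall>i. norm (Dc i x) \<le> norm (Dc i xs) + 1"
    proof
      fix i
      have "norm (Dc i x) \<le> norm (Dc i xs) + norm (Dc i x - Dc i xs)" by (rule norm_triangle_sub)
      moreover have "norm (Dc i x - Dc i xs) < 1" using Pw by blast
      ultimately show "norm (Dc i x) \<le> norm (Dc i xs) + 1" by linarith
    qed
    show ?thesis using Pw tg q pd D by blast
  qed
  have PUw: "fst w \<in> ball xs r \<and> (\<forall>i. aa \<le> \<bar>tt i (fst w) (fst (snd w))\<bar>)
      \<and> (\<forall>i. (tt i (fst w) (fst (snd w)))^2/2 \<le> (tt i (fst w) (fst (snd w)))^2 + 4*\<rho>* snd (snd w))
      \<and> (\<forall>i. 0 < (tt i (fst w) (fst (snd w)))^2 + 4*\<rho>* snd (snd w))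
      \<and> (\<forall>v. \<kappa> * (norm v)^2 \<le> v \<bullet> (HM (fst w) (fst (snd w)) (snd (snd w)) *v v))
      \<and> (\<forall>i. norm (Dc i (fst w)) \<le> norm (Dc i xs) + 1)" if "w \<in> U" for w
    using PU[of "fst w" "fst (snd w)" "snd (snd w)"] that by simp
  define \<Phi> where "\<Phi> w = (GG w, snd w)" for w
  define \<Phi>' where "\<Phi>' w = Blinfun (\<lambda>v. (GD w v, snd v))" for w
  have dGG: "(GG has_derivative GD w) (at w)" if "w \<in> U" for w
    using GG_deriv PUw[OF that] by blast
  have blU: "bounded_linear (\<lambda>v. (GD w v, snd v))" if "w \<in> U" for w
    by (rule bounded_linear_Pair[OF has_derivative_bounded_linear[OF dGG[OF that]] bounded_linear_snd])
  have ap\<Phi>': "blinfun_apply (\<Phi>' w) = (\<lambda>v. (GD w v, snd v))" if "w \<in> U" for w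
    unfolding \<Phi>'_def by (rule bounded_linear_Blinfun_apply[OF blU[OF that]])
  have d\<Phi>: "(\<Phi> has_derivative blinfun_apply (\<Phi>' w)) (at w)" if "w \<in> U" for w
    unfolding ap\<Phi>'[OF that] \<Phi>_def
    by (rule has_derivative_Pair[OF dGG[OF that] has_derivative_snd[OF has_derivative_ident]])
  have cGD: "isCont (\<lambda>w. GD w v) w" if "w \<in> U" for w v
  proof -
    obtain x s \<mu> where w: "w = (x, (s, \<mu>))" by (metis prod.collapse)
    have wU: "(x,(s,\<mu>)) \<in> U" using that w by simp
    have pu: "x \<in> ball xs r" "\<forall>i. 0 < (tt i x s)^2 + 4*\<rho>*\<mu>" using PU[OF wU] by blast+
    have ch: "isCont (\<lambda>w. HM (fst w) (fst (snd w)) (snd (snd w))) (x, (s, \<mu>))"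
      using r(2) pu by (intro cHM) (auto simp: less_imp_neq[symmetric] dest: bspec)
    have c3: "isCont (\<lambda>w. phit \<rho> (tt i (fst w) (fst (snd w))) (snd (snd w))) (x, (s, \<mu>))" for i
      using pu by (intro cont_phit ctt cmu) (auto simp: less_imp_neq[symmetric])
    have c4: "isCont (\<lambda>w. phim \<rho> (tt i (fst w) (fst (snd w))) (snd (snd w))) (x, (s, \<mu>))" for i
      using pu by (intro cont_phim ctt cmu) (auto simp: less_imp_neq[symmetric])
    show ?thesis unfolding w GD_def GP_def
      by (intro continuous_diff cont_mv ch continuous_sum continuous_scaleR continuous_add
          continuous_mult c3 c4 continuous_const cDc)
  qed
  have c\<Phi>': "continuous_on U \<Phi>'"
  proof (rule continuous_on_blinfun_componentwise)
    fix i :: "(real^'n) \<times> ((real^'m) \<times> real)"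
    have "continuous_on U (\<lambda>w. (GD w i, snd i))"
      by (intro continuous_at_imp_continuous_on ballI continuous_Pair cGD continuous_const) auto
    then show "continuous_on U (\<lambda>w. blinfun_apply (\<Phi>' w) i)"
      by (rule continuous_on_cong[THEN iffD1, rotated 2]) (auto simp: ap\<Phi>')
  qed
  define cL where "cL = \<kappa> / (1 + Mb + \<kappa>)"
  have cL: "cL > 0" unfolding cL_def using kp Mb_nn by simp
  have lb\<Phi>: "cL * norm v \<le> norm (blinfun_apply (\<Phi>' w) v)" if "w \<in> U" for w v
  proof -
    obtain x s \<mu> where w: "w = (x, (s, \<mu>))" by (metis prod.collapse)
    have wU: "(x,(s,\<mu>)) \<in> U" using that w by simp
    show ?thesis unfolding w ap\<Phi>'[OF wU] cL_def
      using lowb[of x s \<mu> \<kappa> v] PU[OF wU] kp by blast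
  qed
  define w0 :: "(real^'n) \<times> ((real^'m) \<times> real)" where "w0 = (xs, (ss, 0))"
  have w0U: "w0 \<in> U" unfolding w0_def U_def using e by simp
  obtain invf where invf: "invf o\<^sub>L \<Phi>' w0 = id_blinfun"
    using lb_leftinv[OF cL] lb\<Phi>[OF w0U] by blast
  obtain U' V g g' where "open U'" "U' \<subseteq> U" "w0 \<in> U'" "open V" "\<Phi> w0 \<in> V" and hom: "homeomorphism U' V \<Phi> g"
    and dg: "\<And>y. y \<in> V \<Longrightarrow> (g has_derivative (g' y)) (at y)"
    and g': "\<And>y. y \<in> V \<Longrightarrow> g' y = inv (blinfun_apply (\<Phi>'(g y)))"
    and bij: "\<And>y. y \<in> V \<Longrightarrow> bij (blinfun_apply (\<Phi>'(g y)))"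
    apply (rule inverse_function_theorem[OF U_open _ c\<Phi>' w0U invf])
     apply (erule d\<Phi>)
    apply blast
    done
  have \<Phi>w0: "\<Phi> w0 = (0, (ss, 0))" unfolding \<Phi>_def w0_def GG_def using G_star by simp
  obtain eV where eV: "eV > 0" "ball (\<Phi> w0) eV \<subseteq> V"
    using open_contains_ball \<open>open V\<close> \<open>\<Phi> w0 \<in> V\<close> by blast
  define \<delta> where "\<delta> = min (e/8) (eV/4)"
  have \<delta>: "\<delta> > 0" unfolding \<delta>_def using e eV by simp
  define xf where "xf p = fst (g (0, p))" for p :: "(real^'m) \<times> real"
  define D where "D = {(s, \<mu>). norm (s - ss) \<le> \<delta> \<and> 0 \<le> \<mu> \<and> \<mu> < \<delta>}"
  have homf: "\<forall>y\<in>V. \<Phi> (g y) = y" "g ` V = U'" "continuous_on V g"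
    using hom by (auto simp: homeomorphism_def)
  have pball: "p \<in> ball (ss, 0) (e/2) \<and> (0, p) \<in> V" if "p \<in> D" for p
  proof -
    obtain s \<mu> where p: "p = (s, \<mu>)" by (metis prod.collapse)
    have sm: "norm (s - ss) \<le> \<delta>" "0 \<le> \<mu>" "\<mu> < \<delta>" using that p unfolding D_def by auto
    have "dist (s, \<mu>) (ss, 0) \<le> dist s ss + dist \<mu> 0" by (rule dist_pair_le)
    also have "\<dots> \<le> 2 * \<delta>" using sm by (simp add: dist_norm)
    finally have d: "dist (s, \<mu>) (ss, 0) \<le> 2 * \<delta>" .
    have "2 * \<delta> < e/2" unfolding \<delta>_def using e by simp
    then have a: "p \<in> ball (ss, 0) (e/2)" using d p by (simp add: dist_commute)
    have "dist (0::real^'n, p) (0, (ss, 0)) \<le> dist (0::real^'n) 0 + dist p (ss, 0)" by (rule dist_pair_le)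
    also have "\<dots> < eV" using d p eV \<delta>_def by simp
    finally have "(0, p) \<in> ball (\<Phi> w0) eV" unfolding \<Phi>w0 by (simp add: dist_commute)
    then show ?thesis using a eV by blast
  qed
  have inD: "g (0, p) = (xf p, p) \<and> G (xf p) (fst p) (snd p) = 0 \<and> xf p \<in> ball xs (e/2) \<and> g (0, p) \<in> U"
    if "p \<in> D" for p
  proof -
    have yV: "(0, p) \<in> V" using pball[OF that] by blast
    have gU: "g (0, p) \<in> U" using homf(2) yV \<open>U' \<subseteq> U\<close> by blast
    have "\<Phi> (g (0, p)) = (0, p)" using homf(1) yV by blast
    then have e1: "GG (g (0, p)) = 0" "snd (g (0, p)) = p" unfolding \<Phi>_def by auto
    have ge: "g (0, p) = (xf p, p)" unfolding xf_def using e1(2) by (metis prod.collapse)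
    have "G (xf p) (fst p) (snd p) = 0" using e1(1) unfolding ge GG_def by simp
    moreover have "xf p \<in> ball xs (e/2)" using gU unfolding ge U_def by simp
    ultimately show ?thesis using ge gU by blast
  qed
  have xU: "(x, p) \<in> U" if "x \<in> ball xs (e/2)" "p \<in> D" for x p
    using that pball unfolding U_def by blast
  have cvxD: "cvx (ball xs (e/2)) (\<lambda>x. Ffun f c x s \<mu> \<rho>) (\<lambda>x. G x s \<mu>) (\<lambda>x. HM x s \<mu>) \<kappa>"
    if "(s, \<mu>) \<in> D" for s \<mu>
  proof
    show "convex (ball xs (e/2))" "open (ball xs (e/2))" "\<kappa> > 0" using kp by auto
    fix x assume x: "x \<in> ball xs (e/2)"
    have pu: "\<forall>i. aa \<le> \<bar>tt i x s\<bar>" "\<forall>v. \<kappa> * (norm v)^2 \<le> v \<bullet> (HM x s \<mu> *v v)"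
      using PU[OF xU[OF x that]] by blast+
    have mu: "\<mu> \<ge> 0" using that unfolding D_def by simp
    show "((\<lambda>x. Ffun f c x s \<mu> \<rho>) has_derivative (\<lambda>h. G x s \<mu> \<bullet> h)) (at x)"
      using aa_pos pu(1) by (intro F_deriv mu) (metis abs_zero not_less)
    have "((\<lambda>x. GG (x, (s, \<mu>))) has_derivative (\<lambda>h. GD (x, (s, \<mu>)) (h, 0))) (at x)"
      by (rule has_derivative_compose[OF has_derivative_Pair[OF has_derivative_ident has_derivative_const] dGG[OF xU[OF x that]]])
    then show "((\<lambda>x. G x s \<mu>) has_derivative (\<lambda>h. HM x s \<mu> *v h)) (at x)"
      by (simp add: GG_def GD_def GP_def zero_prod_def)
    fix v show "\<kappa> * (norm v)^2 \<le> v \<bullet> (HM x s \<mu> *v v)" using pu(2) by blast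
  qed
  have minD: "xf (s, \<mu>) \<in> ball xs (e/2) \<and>
            (\<forall>x\<in>ball xs (e/2). Ffun f c (xf (s, \<mu>)) s \<mu> \<rho> \<le> Ffun f c x s \<mu> \<rho>) \<and>
            (\<forall>x\<in>ball xs (e/2). Ffun f c x s \<mu> \<rho> \<le> Ffun f c (xf (s, \<mu>)) s \<mu> \<rho> \<longrightarrow> x = xf (s, \<mu>))"
    if sD: "(s, \<mu>) \<in> D" for s \<mu>
  proof -
    interpret C: cvx "ball xs (e/2)" "\<lambda>x. Ffun f c x s \<mu> \<rho>" "\<lambda>x. G x s \<mu>" "\<lambda>x. HM x s \<mu>" \<kappa>
      by (rule cvxD[OF sD])
    have x0: "xf (s, \<mu>) \<in> ball xs (e/2)" "G (xf (s, \<mu>)) s \<mu> = 0" using inD[OF sD] by auto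
    show ?thesis using x0 C.minimizer[OF x0(1) x0(2)] by blast
  qed
  define D' where "D' p = Blinfun (\<lambda>q. fst (g' (0, p) (0, q)))" for p :: "(real^'m) \<times> real"
  have dxf0: "(xf has_derivative (\<lambda>q. fst (g' (0, p) (0, q)))) (at p)" if "p \<in> D" for p
  proof -
    have yV: "(0, p) \<in> V" using pball[OF that] by blast
    show ?thesis unfolding xf_def
      by (rule has_derivative_fst[OF has_derivative_compose[OF has_derivative_Pair[OF has_derivative_const has_derivative_ident] dg[OF yV]]])
  qed
  have apD': "blinfun_apply (D' p) = (\<lambda>q. fst (g' (0, p) (0, q)))" if "p \<in> D" for p
    unfolding D'_def by (rule bounded_linear_Blinfun_apply[OF has_derivative_bounded_linear[OF dxf0[OF that]]])
  have dxf: "(xf has_derivative blinfun_apply (D' p)) (at p)" if "p \<in> D" for p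
    using dxf0[OF that] apD'[OF that] by simp
  have contD': "continuous_on D D'"
  proof -
    have cA: "continuous_on D (\<lambda>p. \<Phi>' (g (0, p)))"
    proof (rule continuous_on_compose2[OF c\<Phi>'])
      show "continuous_on D (\<lambda>p. g (0, p))"
        by (rule continuous_on_compose2[OF homf(3)]) (auto intro!: continuous_intros dest: pball)
      show "(\<lambda>p. g (0, p)) ` D \<subseteq> U" using inD by blast
    qed
    have lbD: "\<forall>p\<in>D. \<forall>v. cL * norm v \<le> norm (blinfun_apply (\<Phi>' (g (0, p))) v)"
      using lb\<Phi> inD by blast
    have blD: "\<forall>p\<in>D. bounded_linear (g' (0, p))"
      using dg pball has_derivative_bounded_linear by blast
    have riD: "\<forall>p\<in>D. \<forall>u. blinfun_apply (\<Phi>' (g (0, p))) (g' (0, p) u) = u"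
    proof (intro ballI allI)
      fix p u assume "p \<in> D"
      then have yV: "(0, p) \<in> V" using pball by blast
      show "blinfun_apply (\<Phi>' (g (0, p))) (g' (0, p) u) = u"
        unfolding g'[OF yV] by (rule surj_f_inv_f[OF bij_is_surj[OF bij[OF yV]]])
    qed
    show ?thesis unfolding continuous_on_iff
    proof (intro ballI allI impI)
      fix p0 and \<epsilon> :: real assume p0: "p0 \<in> D" and \<epsilon>: "0 < \<epsilon>"
      obtain d where d: "d > 0" "\<forall>p\<in>D. dist p p0 < d \<longrightarrow> (\<forall>v. norm (g' (0, p) v - g' (0, p0) v) \<le> \<epsilon>/2 * norm v)"
        using inv_cont[OF cA cL lbD blD riD p0, of "\<epsilon>/2"] \<epsilon> by auto
      show "\<exists>d>0. \<forall>p\<in>D. dist p p0 < d \<longrightarrow> dist (D' p) (D' p0) < \<epsilon>"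
      proof (intro exI[of _ d] conjI ballI impI)
        show "d > 0" by fact
        fix p assume p: "p \<in> D" "dist p p0 < d"
        have "norm (D' p - D' p0) \<le> \<epsilon>/2"
        proof (rule norm_blinfun_bound)
          show "0 \<le> \<epsilon>/2" using \<epsilon> by simp
          fix q
          have "norm (blinfun_apply (D' p - D' p0) q) = norm (fst (g' (0, p) (0, q) - g' (0, p0) (0, q)))"
            by (simp add: blinfun.diff_left apD'[OF p(1)] apD'[OF p0])
          also have "\<dots> \<le> norm (g' (0, p) (0, q) - g' (0, p0) (0, q))" by (metis norm_fst_le prod.collapse)
          also have "\<dots> \<le> \<epsilon>/2 * norm (0::real^'n, q)" using d(2) p by blast
          finally show "norm (blinfun_apply (D' p - D' p0) q) \<le> \<epsilon>/2 * norm q" by (simp add: norm_Pair)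
        qed
        then show "dist (D' p) (D' p0) < \<epsilon>" using \<epsilon> by (simp add: dist_norm)
      qed
    qed
  qed
  define K1 where "K1 = (\<Sum>i\<in>UNIV. norm (Dc i xs))"
  define C1 where "C1 = K1 * (1 + 2*\<rho>/aa) / \<kappa>"
  define LC where "LC = (\<Sum>i\<in>UNIV. norm (Dc i xs) + 1)"
  define C2 where "C2 = real CARD('m) * (1 + 2*\<rho>/aa) + \<rho> * LC * C1"
  have K1: "K1 \<ge> 0" unfolding K1_def by (simp add: sum_nonneg)
  have C1: "C1 \<ge> 0" unfolding C1_def using K1 kp aa_pos rho0_pos by simp
  have LC: "LC \<ge> 0" unfolding LC_def by (simp add: sum_nonneg add_nonneg_nonneg)
  have C2: "C2 \<ge> 0" unfolding C2_def using C1 LC aa_pos rho0_pos by simp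
  have bounds: "norm (xf (s, \<mu>) - xs) \<le> C1 * (norm (s - ss) + \<mu>) \<and>
      norm (\<rho> *\<^sub>R yvec c (xf (s, \<mu>)) s \<mu> \<rho> - ss) \<le> C2 * (norm (s - ss) + \<mu>)"
    if sD: "(s, \<mu>) \<in> D" for s \<mu>
  proof -
    interpret C: cvx "ball xs (e/2)" "\<lambda>x. Ffun f c x s \<mu> \<rho>" "\<lambda>x. G x s \<mu>" "\<lambda>x. HM x s \<mu>" \<kappa>
      by (rule cvxD[OF sD])
    define x where "x = xf (s, \<mu>)"
    have mu: "\<mu> \<ge> 0" using sD unfolding D_def by simp
    have x: "x \<in> ball xs (e/2)" "G x s \<mu> = 0" using inD[OF sD] unfolding x_def by auto
    have xs: "xs \<in> ball xs (e/2)" using e by simp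
    have "\<kappa> * (norm (x - xs))^2 \<le> (G x s \<mu> - G xs s \<mu>) \<bullet> (x - xs)" by (rule C.mono[OF x(1) xs])
    also have "\<dots> = - (G xs s \<mu> \<bullet> (x - xs))" using x(2) by simp
    also have "\<dots> \<le> norm (G xs s \<mu>) * norm (x - xs)"
      by (metis Cauchy_Schwarz_ineq2 abs_le_D2)
    finally have m: "\<kappa> * (norm (x - xs))^2 \<le> norm (G xs s \<mu>) * norm (x - xs)" .
    have kx: "\<kappa> * norm (x - xs) \<le> norm (G xs s \<mu>)"
    proof (cases "x = xs")
      case False
      then have "norm (x - xs) > 0" by simp
      then show ?thesis using m by (simp add: power2_eq_square mult_ac)
    qed simp
    have tgxs: "\<forall>i. aa \<le> \<bar>tt i xs s\<bar>" using PU[OF xU[OF xs sD]] by blast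
    have "norm (G xs s \<mu>) \<le> K1 * (1 + 2*\<rho>/aa) * (norm (s - ss) + \<mu>)"
      unfolding K1_def by (rule G_xs_bound[OF mu tgxs])
    with kx have "\<kappa> * norm (x - xs) \<le> K1 * (1 + 2*\<rho>/aa) * (norm (s - ss) + \<mu>)" by linarith
    then have b1: "norm (x - xs) \<le> C1 * (norm (s - ss) + \<mu>)"
      unfolding C1_def using kp by (simp add: field_simps)
    have Dball: "\<forall>i. \<forall>y\<in>ball xs (e/2). norm (Dc i y) \<le> norm (Dc i xs) + 1"
      using PU xU[OF _ sD] by blast
    have cl: "\<forall>i. \<bar>c x $ i - c xs $ i\<bar> \<le> (norm (Dc i xs) + 1) * norm (x - xs)"
      using c_lip Dball x(1) by blast
    have tgx: "\<forall>i. aa \<le> \<bar>tt i x s\<bar>" using PU[OF xU[OF x(1) sD]] by blast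
    have "norm (\<rho> *\<^sub>R yvec c x s \<mu> \<rho> - ss) \<le> real CARD('m) * (1 + 2*\<rho>/aa) * (norm (s - ss) + \<mu>)
     + \<rho> * LC * norm (x - xs)"
      unfolding LC_def by (rule ytilde_bound[OF mu tgx cl])
    also have "\<rho> * LC * norm (x - xs) \<le> \<rho> * LC * (C1 * (norm (s - ss) + \<mu>))"
      using b1 LC rho0_pos by (intro mult_left_mono) auto
    finally have "norm (\<rho> *\<^sub>R yvec c x s \<mu> \<rho> - ss) \<le> C2 * (norm (s - ss) + \<mu>)"
      unfolding C2_def by (simp add: algebra_simps)
    then show ?thesis using b1 unfolding x_def by simp
  qed
  define C where "C = C1 + C2 + 1"
  have Cpos: "C > 0" unfolding C_def using C1 C2 by simp
  have bC: "norm (xf (s, \<mu>) - xs) \<le> C * (norm (s - ss) + \<mu>) \<and>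
      norm (\<rho> *\<^sub>R yvec c (xf (s, \<mu>)) s \<mu> \<rho> - ss) \<le> C * (norm (s - ss) + \<mu>)"
    if sD: "(s, \<mu>) \<in> D" for s \<mu>
  proof -
    have z: "0 \<le> norm (s - ss) + \<mu>" using sD unfolding D_def by simp
    have "C1 * (norm (s - ss) + \<mu>) \<le> C * (norm (s - ss) + \<mu>)" "C2 * (norm (s - ss) + \<mu>) \<le> C * (norm (s - ss) + \<mu>)"
      using z C1 C2 unfolding C_def by (intro mult_right_mono; simp)+
    then show ?thesis using bounds[OF sD] by linarith
  qed
  show ?thesis
  proof (rule exI[of _ \<delta>], rule conjI[OF \<delta>], rule exI[of _ "e/2"], rule conjI, use e in simp,
      rule exI[of _ \<delta>], rule conjI[OF \<delta>])
    show "let D = {(s, \<mu>). norm (s - ss) \<le> \<delta> \<and> 0 \<le> \<mu> \<and> \<mu> < \<delta>} in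
      \<exists>xf :: (real^'m) \<times> real \<Rightarrow> real^'n.
        (\<forall>(s, \<mu>)\<in>D. xf (s, \<mu>) \<in> ball xs (e/2) \<and>
            (\<forall>x\<in>ball xs (e/2). Ffun f c (xf (s, \<mu>)) s \<mu> \<rho> \<le> Ffun f c x s \<mu> \<rho>) \<and>
            (\<forall>x\<in>ball xs (e/2). Ffun f c x s \<mu> \<rho> \<le> Ffun f c (xf (s, \<mu>)) s \<mu> \<rho> \<longrightarrow> x = xf (s, \<mu>)))
        \<and> (\<exists>D' :: (real^'m) \<times> real \<Rightarrow> (((real^'m) \<times> real) \<Rightarrow>\<^sub>L (real^'n)).
              (\<forall>p\<in>interior D. (xf has_derivative blinfun_apply (D' p)) (at p))
              \<and> continuous_on (interior D) D')
        \<and> (\<exists>C>0. \<forall>(s, \<mu>)\<in>D.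
              norm (xf (s, \<mu>) - xs) \<le> C * (norm (s - ss) + \<mu>) \<and>
              norm (\<rho> *\<^sub>R yvec c (xf (s, \<mu>)) s \<mu> \<rho> - ss) \<le> C * (norm (s - ss) + \<mu>))"
      unfolding Let_def D_def[symmetric]
    proof (intro exI[of _ xf] conjI)
      show "\<forall>(s, \<mu>)\<in>D. xf (s, \<mu>) \<in> ball xs (e/2) \<and>
            (\<forall>x\<in>ball xs (e/2). Ffun f c (xf (s, \<mu>)) s \<mu> \<rho> \<le> Ffun f c x s \<mu> \<rho>) \<and>
            (\<forall>x\<in>ball xs (e/2). Ffun f c x s \<mu> \<rho> \<le> Ffun f c (xf (s, \<mu>)) s \<mu> \<rho> \<longrightarrow> x = xf (s, \<mu>))"
        using minD by blast
      show "\<exists>D' :: (real^'m) \<times> real \<Rightarrow> (((real^'m) \<times> real) \<Rightarrow>\<^sub>L (real^'n)).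
              (\<forall>p\<in>interior D. (xf has_derivative blinfun_apply (D' p)) (at p))
              \<and> continuous_on (interior D) D'"
        using dxf contD' interior_subset[of D] continuous_on_subset by blast
      show "\<exists>C>0. \<forall>(s, \<mu>)\<in>D.
              norm (xf (s, \<mu>) - xs) \<le> C * (norm (s - ss) + \<mu>) \<and>
              norm (\<rho> *\<^sub>R yvec c (xf (s, \<mu>)) s \<mu> \<rho> - ss) \<le> C * (norm (s - ss) + \<mu>)"
        using bC Cpos by blast
    qed
  qed
qed

end

theorem theorem5p2:
  fixes f :: "real^'n \<Rightarrow> real" and c :: "real^'n \<Rightarrow> real^'m"
    and Df :: "real^'n \<Rightarrow> real^'n" and Hf :: "real^'n \<Rightarrow> real^'n^'n"
    and Dc :: "'m \<Rightarrow> real^'n \<Rightarrow> real^'n" and Hc :: "'m \<Rightarrow> real^'n \<Rightarrow> real^'n^'n"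
    and xs :: "real^'n" and ss :: "real^'m" and \<rho>0 :: real
  assumes f_grad: "\<And>x. (f has_derivative (\<lambda>h. Df x \<bullet> h)) (at x)"
    and f_hess: "\<And>x. (Df has_derivative (\<lambda>h. Hf x *v h)) (at x)"
    and c_grad: "\<And>i x. ((\<lambda>x. c x $ i) has_derivative (\<lambda>h. Dc i x \<bullet> h)) (at x)"
    and c_hess: "\<And>i x. (Dc i has_derivative (\<lambda>h. Hc i x *v h)) (at x)"
    and lipschitz: "\<exists>r>0. \<exists>L. \<forall>x\<in>ball xs r. \<forall>x'\<in>ball xs r.
          norm (Hf x - Hf x') \<le> L * norm (x - x') \<and>
          (\<forall>i. norm (Hc i x - Hc i x') \<le> L * norm (x - x'))"
    and KKT_stat: "Df xs - (\<Sum>i\<in>UNIV. ss$i *\<^sub>R Dc i xs) = 0"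
    and KKT_feas: "\<forall>i. c xs $ i \<ge> 0"
    and KKT_dual: "\<forall>i. ss $ i \<ge> 0"
    and KKT_compl: "ss \<bullet> c xs = 0"
    and LICQ: "\<And>a. (\<Sum>i\<in>{i. c xs $ i = 0}. a i *\<^sub>R Dc i xs) = 0 \<Longrightarrow>
                  \<forall>i\<in>{i. c xs $ i = 0}. a i = 0"
    and strict_compl: "\<forall>i. ss $ i + c xs $ i > 0"
    and rho0_pos: "\<rho>0 > 0"
    and B_posdef: "\<forall>v. v \<noteq> 0 \<longrightarrow>
          v \<bullet> ((Hf xs - (\<Sum>i\<in>UNIV. ss$i *\<^sub>R Hc i xs)
                 + \<rho>0 *\<^sub>R (\<Sum>i\<in>{i. ss$i > 0}. outer (Dc i xs))) *v v) > 0"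
  shows "\<exists>\<mu>b>0. \<exists>\<epsilon>>0. \<exists>\<delta>>0.
     (let D = {(s, \<mu>). norm (s - ss) \<le> \<delta> \<and> 0 \<le> \<mu> \<and> \<mu> < \<mu>b} in
      \<exists>xf :: (real^'m) \<times> real \<Rightarrow> real^'n.
        (\<forall>(s, \<mu>)\<in>D. xf (s, \<mu>) \<in> ball xs \<epsilon> \<and>
            (\<forall>x\<in>ball xs \<epsilon>. Ffun f c (xf (s, \<mu>)) s \<mu> \<rho>0 \<le> Ffun f c x s \<mu> \<rho>0) \<and>
            (\<forall>x\<in>ball xs \<epsilon>. Ffun f c x s \<mu> \<rho>0 \<le> Ffun f c (xf (s, \<mu>)) s \<mu> \<rho>0 \<longrightarrow> x = xf (s, \<mu>)))
        \<and> (\<exists>D' :: (real^'m) \<times> real \<Rightarrow> (((real^'m) \<times> real) \<Rightarrow>\<^sub>L (real^'n)).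
              (\<forall>p\<in>interior D. (xf has_derivative blinfun_apply (D' p)) (at p))
              \<and> continuous_on (interior D) D')
        \<and> (\<exists>C>0. \<forall>(s, \<mu>)\<in>D.
              norm (xf (s, \<mu>) - xs) \<le> C * (norm (s - ss) + \<mu>) \<and>
              norm (\<rho>0 *\<^sub>R yvec c (xf (s, \<mu>)) s \<mu> \<rho>0 - ss) \<le> C * (norm (s - ss) + \<mu>)))"
  proof -
  interpret prob f c Df Hf Dc Hc xs ss \<rho>0
    by (unfold_locales) (fact f_grad f_hess c_grad c_hess lipschitz KKT_stat KKT_feas KKT_dual KKT_compl
        strict_compl rho0_pos B_posdef)+
  show ?thesis by (rule main)
qed

end
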